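(* For each $s$ let $\mathbb F_s$ be a finite field of $q_s$ elements with $q_s$ a power of a prime $p_s$, and assume that there is no prime $p$ with $\{s: p_s=p\}\in\mathcal D$. For $\mathcal D$-almost all $s$ let $\mathfrak L_s\subseteq\mathfrak F_s^{alg}$ be an Artin–Schreier extension of $\mathfrak F_s=\mathbb F_s(t)$, i.e. $\mathfrak L_s=\mathfrak F_s(\alpha_s)$ where $\alpha_s^{p_s}-\alpha_s=a_s$ for some $a_s\in\mathfrak F_s$ and $\alpha_s\notin\mathfrak F_s$. Let $\mathfrak L=\prod_s\mathfrak L_s/\mathcal D$. Then $\mathfrak L\cap\mathbb F^{alg}=\mathbb F$.
   Context: Let $S$ be an infinite set, $\mathcal D$ a nonprincipal ultrafilter on $S$; ultraproducts $\prod_sA_s/\mathcal D$ consist of tuples modulo agreement on a set in $\mathcal D$, classes written $\mathrm{ulim}_sa_s$, componentwise operations. $\mathfrak K=\prod_s\mathbb F_s/\mathcal D$, $\mathbb F=\mathfrak K(t)$, viewed inside $\prod_s\mathfrak F_s/\mathcal D$ via $\sum_i(\mathrm{ulim}_sa_{i,s})t^i\mapsto\mathrm{ulim}_s\sum_ia_{i,s}t^i$. Fix algebraic closures $\mathfrak F_s^{alg}$; $\mathbb F^{alg}$ is the set of elements of $\prod_s\mathfrak F_s^{alg}/\mathcal D$ algebraic over $\mathbb F$. *)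

theory Defs
  imports "HOL-Algebra.Algebraic_Closure" "HOL-Algebra.Finite_Extensions" "HOL-Algebra.Generated_Fields"
          "HOL-Computational_Algebra.Primes"
begin

text \<open>Ultrafilters are modelled as HOL filters on the index type; D-almost-all is
  "eventually P D".  Ultraproduct elements are represented by functions s => x s
  (with x s in the s-th structure for D-almost all s); every predicate below is
  invariant under D-almost-everywhere equality, so it is a predicate on the
  classes ulim x.\<close>

definition nonprincipal_ultrafilter :: "'s filter \<Rightarrow> bool" where
  "nonprincipal_ultrafilter D \<longleftrightarrow>
     D \<noteq> bot \<and> (\<forall>P. eventually P D \<or> eventually (\<lambda>s. \<not> P s) D) \<and>
     (\<forall>s0. \<not> eventually (\<lambda>s. s = s0) D)"

definition ratfield :: "('s \<Rightarrow> 'b ring) \<Rightarrow> ('s \<Rightarrow> 'b set) \<Rightarrow> ('s \<Rightarrow> 'b) \<Rightarrow> 's \<Rightarrow> 'b set" where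
  "ratfield \<Omega> Fq t s = generate_field (\<Omega> s) (insert (t s) (Fq s))"

text \<open>Membership of ulim x in the image of IF = K(t), K = prod F_s / D, under
  sum_i (ulim a_{i,s}) t^i |-> ulim sum_i a_{i,s} t^i (extended to quotients):
  x is D-a.e. a quotient of two polynomials in t_s with coefficients in F_s, of
  uniformly bounded length, whose denominator is D-a.e. nonzero.\<close>
definition in_IF :: "'s filter \<Rightarrow> ('s \<Rightarrow> 'b ring) \<Rightarrow> ('s \<Rightarrow> 'b set) \<Rightarrow> ('s \<Rightarrow> 'b) \<Rightarrow> ('s \<Rightarrow> 'b) \<Rightarrow> bool" where
  "in_IF D \<Omega> Fq t x \<longleftrightarrow>
     (\<exists>N (a :: 's \<Rightarrow> 'b list) (b :: 's \<Rightarrow> 'b list). eventually (\<lambda>s.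
        length (a s) \<le> N \<and> length (b s) \<le> N \<and>
        set (a s) \<subseteq> Fq s \<and> set (b s) \<subseteq> Fq s \<and>
        ring.eval (\<Omega> s) (b s) (t s) \<noteq> \<zero>\<^bsub>\<Omega> s\<^esub> \<and>
        x s = ring.eval (\<Omega> s) (a s) (t s) \<otimes>\<^bsub>\<Omega> s\<^esub> inv\<^bsub>\<Omega> s\<^esub> (ring.eval (\<Omega> s) (b s) (t s))) D)"

text \<open>ulim x lies in prod Omega_s / D and is algebraic over IF: it is a root of a
  polynomial sum_{i\<le>n} c_i X^i with all c_i in IF and c_n \<noteq> 0 in the ultraproduct.\<close>
definition alg_over_IF :: "'s filter \<Rightarrow> ('s \<Rightarrow> 'b ring) \<Rightarrow> ('s \<Rightarrow> 'b set) \<Rightarrow> ('s \<Rightarrow> 'b) \<Rightarrow> ('s \<Rightarrow> 'b) \<Rightarrow> bool" where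
  "alg_over_IF D \<Omega> Fq t x \<longleftrightarrow>
     eventually (\<lambda>s. x s \<in> carrier (\<Omega> s)) D \<and>
     (\<exists>n (c :: nat \<Rightarrow> 's \<Rightarrow> 'b).
        (\<forall>i\<le>n. in_IF D \<Omega> Fq t (c i)) \<and>
        \<not> eventually (\<lambda>s. c n s = \<zero>\<^bsub>\<Omega> s\<^esub>) D \<and>
        eventually (\<lambda>s. (\<Oplus>\<^bsub>\<Omega> s\<^esub> i\<in>{..n}. c i s \<otimes>\<^bsub>\<Omega> s\<^esub> (x s [^]\<^bsub>\<Omega> s\<^esub> i)) = \<zero>\<^bsub>\<Omega> s\<^esub>) D)"

end

theory Submission
  imports Defs
begin

context cring begin

lemma binomial_ring:
  assumes x: "x \<in> carrier R" and y: "y \<in> carrier R"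
  shows "(x \<oplus> y) [^] n = (\<Oplus>k\<in>{..n}. [(n choose k)] \<cdot> (x [^] k \<otimes> y [^] (n - k)))"
proof (induction n)
  case 0
  then show ?case using x y by (simp add: finsum_0)
next
  case (Suc n)
  define T where "T = (\<lambda>m k. [(m choose k)] \<cdot> (x [^] k \<otimes> y [^] (m - k)))"
  have Tc: "\<And>m k. T m k \<in> carrier R" unfolding T_def using x y by simp
  have IH: "(x \<oplus> y) [^] n = (\<Oplus>k\<in>{..n}. T n k)" using Suc unfolding T_def by simp
  have "(x \<oplus> y) [^] Suc n = (\<Oplus>k\<in>{..n}. T n k) \<otimes> x \<oplus> (\<Oplus>k\<in>{..n}. T n k) \<otimes> y"
    using IH x y Tc by (simp add: r_distr)
  also have "(\<Oplus>k\<in>{..n}. T n k) \<otimes> x = (\<Oplus>k\<in>{..n}. T n k \<otimes> x)"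
    using x Tc by (simp add: finsum_ldistr)
  also have "(\<Oplus>k\<in>{..n}. T n k) \<otimes> y = (\<Oplus>k\<in>{..n}. T n k \<otimes> y)"
    using y Tc by (simp add: finsum_ldistr)
  also have "(\<Oplus>k\<in>{..n}. T n k \<otimes> x) = (\<Oplus>k\<in>{..n}. [(n choose k)] \<cdot> (x [^] Suc k \<otimes> y [^] (n - k)))"
  proof (rule finsum_cong')
    fix k assume "k \<in> {..n}"
    show "T n k \<otimes> x = [(n choose k)] \<cdot> (x [^] Suc k \<otimes> y [^] (n - k))"
      unfolding T_def using x y
      by (simp add: add_pow_ldistr add_pow_rdistr m_ac nat_pow_Suc2)
  qed (use x y in auto)
  also have "(\<Oplus>k\<in>{..n}. T n k \<otimes> y) = (\<Oplus>k\<in>{..Suc n}. [(n choose k)] \<cdot> (x [^] k \<otimes> y [^] (Suc n - k)))"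
  proof -
    have "(\<Oplus>k\<in>{..Suc n}. [(n choose k)] \<cdot> (x [^] k \<otimes> y [^] (Suc n - k)))
        = [(n choose Suc n)] \<cdot> (x [^] Suc n \<otimes> y [^] (Suc n - Suc n)) \<oplus> (\<Oplus>k\<in>{..n}. [(n choose k)] \<cdot> (x [^] k \<otimes> y [^] (Suc n - k)))"
      using x y by (simp add: finsum_Suc)
    also have "\<dots> = (\<Oplus>k\<in>{..n}. [(n choose k)] \<cdot> (x [^] k \<otimes> y [^] (Suc n - k)))"
      using x y by (simp add: binomial_eq_0)
    also have "\<dots> = (\<Oplus>k\<in>{..n}. T n k \<otimes> y)"
    proof (rule finsum_cong')
      fix k assume k: "k \<in> {..n}"
      then have "Suc n - k = Suc (n - k)" by auto
      then show "[(n choose k)] \<cdot> (x [^] k \<otimes> y [^] (Suc n - k)) = T n k \<otimes> y"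
        unfolding T_def using x y
        by (simp add: add_pow_ldistr add_pow_rdistr m_ac nat_pow_Suc2)
    qed (use Tc y in auto)
    finally show ?thesis by simp
  qed
  finally have L: "(x \<oplus> y) [^] Suc n = (\<Oplus>k\<in>{..n}. [(n choose k)] \<cdot> (x [^] Suc k \<otimes> y [^] (n - k)))
     \<oplus> (\<Oplus>k\<in>{..Suc n}. [(n choose k)] \<cdot> (x [^] k \<otimes> y [^] (Suc n - k)))" .
  have B2: "(\<Oplus>k\<in>{..Suc n}. [(n choose k)] \<cdot> (x [^] k \<otimes> y [^] (Suc n - k)))
     = (\<Oplus>k\<in>{..n}. [(n choose Suc k)] \<cdot> (x [^] Suc k \<otimes> y [^] (n - k))) \<oplus> y [^] Suc n"
    using x y by (subst finsum_Suc2) (auto simp del: nat_pow_Suc)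
  have R1: "(\<Oplus>k\<in>{..Suc n}. T (Suc n) k)
     = (\<Oplus>k\<in>{..n}. [(Suc n choose Suc k)] \<cdot> (x [^] Suc k \<otimes> y [^] (n - k))) \<oplus> y [^] Suc n"
    unfolding T_def using x y by (subst finsum_Suc2) (auto simp del: nat_pow_Suc)
  have R2: "(\<Oplus>k\<in>{..n}. [(Suc n choose Suc k)] \<cdot> (x [^] Suc k \<otimes> y [^] (n - k)))
     = (\<Oplus>k\<in>{..n}. [(n choose k)] \<cdot> (x [^] Suc k \<otimes> y [^] (n - k)) \<oplus> [(n choose Suc k)] \<cdot> (x [^] Suc k \<otimes> y [^] (n - k)))"
    using x y by (intro finsum_cong') (auto simp: add.nat_pow_mult)
  have R3: "\<dots> = (\<Oplus>k\<in>{..n}. [(n choose k)] \<cdot> (x [^] Suc k \<otimes> y [^] (n - k))) \<oplus> (\<Oplus>k\<in>{..n}. [(n choose Suc k)] \<cdot> (x [^] Suc k \<otimes> y [^] (n - k)))"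
    using x y by (intro finsum_addf) auto
  have "(x \<oplus> y) [^] Suc n = finsum R (T (Suc n)) {..Suc n}"
    unfolding L B2 R1 R2 R3
    using x y by (simp add: a_ac)
  then show ?case unfolding T_def .
qed


lemma char_mult_zero:
  assumes p: "[(p::nat)] \<cdot> \<one> = \<zero>" and z: "z \<in> carrier R"
  shows "[(p * (m::nat))] \<cdot> z = \<zero>"
proof -
  have "[p] \<cdot> z = \<zero>"
    using add_pow_ldistr[of \<one> z p] z p by simp
  moreover have "[(p * m)] \<cdot> z = [m] \<cdot> ([p] \<cdot> z)"
    using z by (simp add: add.nat_pow_pow)
  ultimately show ?thesis by simp
qed

lemma frobenius_add:
  assumes pr: "prime (p::nat)" and p: "[p] \<cdot> \<one> = \<zero>"
    and x: "x \<in> carrier R" and y: "y \<in> carrier R"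
  shows "(x \<oplus> y) [^] p = x [^] p \<oplus> y [^] p"
proof -
  define f where "f = (\<lambda>k. [(p choose k)] \<cdot> (x [^] k \<otimes> y [^] (p - k)))"
  have fc: "\<And>k. f k \<in> carrier R" unfolding f_def using x y by simp
  have mid: "f k = \<zero>" if "0 < k" "k < p" for k
  proof -
    have "p dvd (p choose k)" using dvd_choose_prime[of k p] that pr by auto
    then obtain m where "p choose k = p * m" by blast
    then show ?thesis unfolding f_def using char_mult_zero[OF p, of _ m] x y by simp
  qed
  obtain j where j: "p = Suc (Suc j)"
    using prime_ge_2_nat[OF pr] by (metis add_2_eq_Suc le_Suc_ex)
  have "(x \<oplus> y) [^] p = finsum R f {..p}" unfolding f_def using binomial_ring[OF x y] .
  also have "\<dots> = f p \<oplus> finsum R f {..Suc j}"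
    unfolding j using fc by (simp add: finsum_Suc del: nat_pow_Suc)
  also have "finsum R f {..Suc j} = (\<Oplus>k\<in>{..j}. f (Suc k)) \<oplus> f 0"
    using fc by (subst finsum_Suc2) auto
  also have "(\<Oplus>k\<in>{..j}. f (Suc k)) = (\<Oplus>k\<in>{..j}. \<zero>)"
    using fc mid j by (intro finsum_cong') auto
  also have "\<dots> = \<zero>" by simp
  also have "f p = x [^] p" unfolding f_def using x y by simp
  also have "f 0 = y [^] p" unfolding f_def using x y by simp
  finally show ?thesis using x y by simp
qed

end

lemma card_set_mset_le_size: "card (set_mset M) \<le> size M"
proof (induction M)
  case empty then show ?case by simp
next
  case (add x M)
  then show ?case by (simp add: card_insert_if)
qed

context field begin

lemma add_pow_one_mult:
  "[(m::nat)] \<cdot> \<one> \<otimes> [(n::nat)] \<cdot> \<one> = [(m * n)] \<cdot> \<one>"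
  using add_pow_ldistr[of \<one> "[n] \<cdot> \<one>" m] by (simp add: add.nat_pow_pow mult.commute)

lemma add_pow_one_power:
  "([(m::nat)] \<cdot> \<one>) [^] (k::nat) = [(m ^ k)] \<cdot> \<one>"
proof (induction k)
  case 0 then show ?case by simp
next
  case (Suc k)
  then show ?case using add_pow_one_mult[of "m ^ k" m] by (simp add: mult.commute)
qed

lemma char_exact:
  assumes pr: "prime (p::nat)" and p: "[p] \<cdot> \<one> = \<zero>" and m: "0 < m" "m < p"
  shows "[(m::nat)] \<cdot> \<one> \<noteq> \<zero>"
proof
  assume mz: "[m] \<cdot> \<one> = \<zero>"
  have "gcd m p = 1"
    using pr m by (metis coprime_commute nat_dvd_not_less prime_imp_coprime_nat coprime_iff_gcd_eq_1)
  then obtain x y where xy: "m * x = p * y + 1" using bezout_nat[of m p] m by auto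
  have "[(m * x)] \<cdot> \<one> = \<zero>" using char_mult_zero[OF mz, of \<one> x] by simp
  moreover have "[(p * y + 1)] \<cdot> \<one> = [(p * y)] \<cdot> \<one> \<oplus> [(1::nat)] \<cdot> \<one>"
    by (simp add: add.nat_pow_mult)
  moreover have "[(p * y)] \<cdot> \<one> = \<zero>" using char_mult_zero[OF p, of \<one> y] by simp
  ultimately have "\<one> = \<zero>" using xy by simp
  then show False by simp
qed

lemma char_inj:
  assumes pr: "prime (p::nat)" and p: "[p] \<cdot> \<one> = \<zero>"
  shows "inj_on (\<lambda>k::nat. [k] \<cdot> \<one>) {..<p}"
proof (rule inj_onI)
  fix i j :: nat assume i: "i \<in> {..<p}" and j: "j \<in> {..<p}" and e: "[i] \<cdot> \<one> = [j] \<cdot> \<one>"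
  show "i = j"
  proof (rule ccontr)
    assume "i \<noteq> j"
    then consider "i < j" | "j < i" by linarith
    then show False
    proof cases
      case 1
      have "[j] \<cdot> \<one> = [i] \<cdot> \<one> \<oplus> [(j - i)] \<cdot> \<one>"
        using 1 by (simp add: add.nat_pow_mult)
      then have "[(j - i)] \<cdot> \<one> = \<zero>" using e by (metis add.nat_pow_closed one_closed r_zero add.l_cancel zero_closed)
      then show False using char_exact[OF pr p, of "j - i"] 1 j by (auto simp: less_imp_diff_less)
    next
      case 2
      have "[i] \<cdot> \<one> = [j] \<cdot> \<one> \<oplus> [(i - j)] \<cdot> \<one>"
        using 2 by (simp add: add.nat_pow_mult)
      then have "[(i - j)] \<cdot> \<one> = \<zero>" using e by (metis add.nat_pow_closed one_closed r_zero add.l_cancel zero_closed)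
      then show False using char_exact[OF pr p, of "i - j"] 2 i by (auto simp: less_imp_diff_less)
    qed
  qed
qed

lemma prime_field_elem_fixed:
  assumes pr: "prime (p::nat)" and p: "[p] \<cdot> \<one> = \<zero>"
  shows "([(k::nat)] \<cdot> \<one>) [^] p = [k] \<cdot> \<one>"
proof (induction k)
  case 0
  then show ?case using prime_gt_0_nat[OF pr] by (simp add: nat_pow_zero)
next
  case (Suc k)
  have "([Suc k] \<cdot> \<one>) [^] p = ([k] \<cdot> \<one> \<oplus> \<one>) [^] p" by simp
  also have "\<dots> = ([k] \<cdot> \<one>) [^] p \<oplus> \<one> [^] p"
    by (rule frobenius_add[OF pr p]) auto
  finally show ?case using Suc by simp
qed

end

context field begin

lemma roots_card_le:
  assumes q: "q \<in> carrier (poly_ring R)" "q \<noteq> []" and S: "finite S" "S \<subseteq> carrier R"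
    and r: "\<And>s. s \<in> S \<Longrightarrow> eval q s = \<zero>"
  shows "card S \<le> degree q"
proof -
  have "S \<subseteq> set_mset (roots q)"
    using roots_mem_iff_is_root[OF q(1)] is_root_def q S r by auto
  then have "card S \<le> card (set_mset (roots q))" by (simp add: card_mono)
  also have "\<dots> \<le> size (roots q)" by (rule card_set_mset_le_size)
  also have "\<dots> \<le> degree q" using size_roots_le_degree[OF q(1)] .
  finally show ?thesis .
qed

lemma eval_X: "x \<in> carrier R \<Longrightarrow> eval [\<one>, \<zero>] x = x"
  by simp

lemma X_carrier: "[\<one>, \<zero>] \<in> carrier (poly_ring R)"
  by (simp add: univ_poly_carrier[symmetric] polynomial_def)

lemma xp_minus_x_roots:
  assumes pr: "prime (p::nat)" and p: "[p] \<cdot> \<one> = \<zero>"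
    and u: "u \<in> carrier R" and up: "u [^] p = u"
  shows "u \<in> (\<lambda>k::nat. [k] \<cdot> \<one>) ` {..<p}"
proof (rule ccontr)
  assume nu: "u \<notin> (\<lambda>k::nat. [k] \<cdot> \<one>) ` {..<p}"
  let ?P = "poly_ring R"
  let ?X = "[\<one>, \<zero>]"
  define h where "h = ?X [^]\<^bsub>?P\<^esub> p \<ominus>\<^bsub>?P\<^esub> ?X"
  interpret P: cring ?P using univ_poly_is_cring[OF carrier_is_subring] .
  have E: "ring_hom_ring ?P R (\<lambda>q. eval q y)" if "y \<in> carrier R" for y
    using eval_ring_hom[OF carrier_is_subring that] .
  have E2: "ring_hom_cring ?P R (\<lambda>q. eval q y)" if "y \<in> carrier R" for y
    using ring_hom_cringI[OF P.cring_axioms cring_axioms ring_hom_ring.homh[OF E[OF that]]] .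
  have hc: "h \<in> carrier ?P" unfolding h_def using X_carrier by simp
  have evh: "eval h y = y [^] p \<ominus> y" if y: "y \<in> carrier R" for y
  proof -
    have c1: "?X [^]\<^bsub>?P\<^esub> p \<in> carrier ?P" using X_carrier by simp
    have c2: "\<ominus>\<^bsub>?P\<^esub> ?X \<in> carrier ?P" using X_carrier by simp
    have "eval h y = eval (?X [^]\<^bsub>?P\<^esub> p) y \<oplus> eval (\<ominus>\<^bsub>?P\<^esub> ?X) y"
      unfolding h_def a_minus_def
      by (rule ring_hom_add[OF ring_hom_ring.homh[OF E[OF y]] c1 c2])
    also have "eval (\<ominus>\<^bsub>?P\<^esub> ?X) y = \<ominus> eval ?X y"
      by (rule ring_hom_cring.hom_a_inv[OF E2[OF y] X_carrier])
    finally have "eval h y = eval (?X [^]\<^bsub>?P\<^esub> p) y \<ominus> eval ?X y"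
      unfolding a_minus_def .
    also have "eval (?X [^]\<^bsub>?P\<^esub> p) y = (eval ?X y) [^] p"
      using ring_hom_ring.hom_nat_pow[OF E[OF y]] X_carrier by simp
    finally show ?thesis using y by simp
  qed
  have degXp: "degree (?X [^]\<^bsub>?P\<^esub> p) = p"
    using polynomial_pow_degree[OF X_carrier, of p] by simp
  have deg: "degree h = p"
  proof -
    have hh: "h = poly_add (?X [^]\<^bsub>?P\<^esub> p) (\<ominus>\<^bsub>?P\<^esub> ?X)"
      unfolding h_def a_minus_def by (simp add: univ_poly_add)
    have d1: "degree (\<ominus>\<^bsub>?P\<^esub> ?X) = 1"
      using univ_poly_a_inv_degree[OF carrier_is_subring X_carrier] by simp
    have pa: "polynomial (carrier R) (?X [^]\<^bsub>?P\<^esub> p)"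
      using X_carrier univ_poly_carrier by blast
    have pb: "polynomial (carrier R) (\<ominus>\<^bsub>?P\<^esub> ?X)"
      using X_carrier univ_poly_carrier by blast
    have ne: "degree (?X [^]\<^bsub>?P\<^esub> p) \<noteq> degree (\<ominus>\<^bsub>?P\<^esub> ?X)"
      using d1 degXp prime_ge_2_nat[OF pr] by linarith
    have "degree (poly_add (?X [^]\<^bsub>?P\<^esub> p) (\<ominus>\<^bsub>?P\<^esub> ?X)) = max p 1"
      using poly_add_degree_eq[OF carrier_is_subring pa pb ne] d1 degXp by metis
    then show ?thesis using hh prime_ge_2_nat[OF pr] by simp
  qed
  have hne: "h \<noteq> []" using deg prime_ge_2_nat[OF pr] by auto
  define S where "S = insert u ((\<lambda>k::nat. [k] \<cdot> \<one>) ` {..<p})"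
  have cardS: "card S = Suc p"
    unfolding S_def using nu card_image[OF char_inj[OF pr p]] by simp
  have "card S \<le> degree h"
  proof (rule roots_card_le[OF hc hne])
    show "finite S" unfolding S_def by simp
    show "S \<subseteq> carrier R" unfolding S_def using u by auto
    fix s assume "s \<in> S"
    then show "eval h s = \<zero>"
      unfolding S_def using evh u up prime_field_elem_fixed[OF pr p] by auto
  qed
  then show False using cardS deg by simp
qed

end

context field begin

lemma coeff_lin:
  assumes a: "a \<in> carrier R"
  shows "coeff [\<one>, \<ominus> a] 0 = \<ominus> a" "coeff [\<one>, \<ominus> a] (Suc 0) = \<one>"
    "coeff [\<one>, \<ominus> a] (Suc (Suc k)) = \<zero>"
  by auto

lemma coeff_lin_mult:
  assumes a: "a \<in> carrier R" and q: "set q \<subseteq> carrier R"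
  shows "coeff (poly_mult [\<one>, \<ominus> a] q) (Suc j) = coeff q j \<ominus> a \<otimes> coeff q (Suc j)"
proof -
  have s1: "set [\<one>, \<ominus> a] \<subseteq> carrier R" using a by auto
  let ?f = "\<lambda>k. coeff [\<one>, \<ominus> a] k \<otimes> coeff q (Suc j - k)"
  have fc: "?f \<in> {..Suc j} \<rightarrow> carrier R" using a q by (auto intro!: m_closed coeff_in_carrier)
  have "coeff (poly_mult [\<one>, \<ominus> a] q) (Suc j) = finsum R ?f {..Suc j}"
    using poly_mult_coeff[OF s1 q] by simp
  also have "\<dots> = (\<Oplus>k\<in>{..j}. ?f (Suc k)) \<oplus> ?f 0"
    using fc by (subst finsum_Suc2) auto
  also have "(\<Oplus>k\<in>{..j}. ?f (Suc k)) = coeff q j"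
  proof (cases j)
    case 0
    then show ?thesis using a q by (simp add: finsum_0)
  next
    case (Suc j')
    have "(\<Oplus>k\<in>{..j}. ?f (Suc k)) = (\<Oplus>k\<in>{..j'}. ?f (Suc (Suc k))) \<oplus> ?f (Suc 0)"
      unfolding Suc using a q by (subst finsum_Suc2) (auto intro!: m_closed coeff_in_carrier)
    also have "(\<Oplus>k\<in>{..j'}. ?f (Suc (Suc k))) = (\<Oplus>k\<in>{..j'}. \<zero>)"
      using a q by (intro finsum_cong') auto
    finally show ?thesis using a q Suc by simp
  qed
  also have "?f 0 = \<ominus> a \<otimes> coeff q (Suc j)" by simp
  finally show ?thesis using a q by (simp add: a_minus_def l_minus)
qed

lemma coeff_lin_mult0:
  assumes a: "a \<in> carrier R" and q: "set q \<subseteq> carrier R"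
  shows "coeff (poly_mult [\<one>, \<ominus> a] q) 0 = \<ominus> a \<otimes> coeff q 0"
proof -
  have s1: "set [\<one>, \<ominus> a] \<subseteq> carrier R" using a by auto
  show ?thesis using poly_mult_coeff[OF s1 q] a q by (simp add: finsum_0)
qed

lemma lin_factor:
  assumes AC: "algebraically_closed R"
    and q: "q \<in> carrier (poly_ring R)" "q \<noteq> []" "lead_coeff q = \<one>" "degree q = Suc m"
    and rq: "\<forall>r\<in>carrier R. eval q r = \<zero> \<longrightarrow> r \<ominus> \<alpha> \<in> K"
  shows "\<exists>a c. a \<in> carrier R \<and> c \<in> carrier (poly_ring R) \<and> q = poly_mult [\<one>, \<ominus> a] c \<and> c \<noteq> [] \<and>
     lead_coeff c = \<one> \<and> degree c = m \<and> a \<ominus> \<alpha> \<in> K \<and>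
     (\<forall>r. r \<in> carrier R \<longrightarrow> eval c r = \<zero> \<longrightarrow> r \<ominus> \<alpha> \<in> K)"
proof -
  have "splitted q" using algebraically_closed.roots_over_carrier[OF AC q(1)] .
  then have "size (roots q) = Suc m" using q(4) unfolding splitted_def by simp
  then have "roots q \<noteq> {#}" by auto
  then obtain a where a: "a \<in> carrier R" and dv: "[\<one>, \<ominus> a] pdivides q"
    using not_empty_rootsE[OF q(1)] by blast
  obtain c where c: "c \<in> carrier (poly_ring R)" and qc0: "q = [\<one>, \<ominus> a] \<otimes>\<^bsub>poly_ring R\<^esub> c"
    using dv unfolding pdivides_def factor_def by blast
  have qc: "q = poly_mult [\<one>, \<ominus> a] c" using qc0 by (simp add: univ_poly_mult)
  have cne: "c \<noteq> []" using qc q(2) by auto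
  have p1: "polynomial (carrier R) [\<one>, \<ominus> a]" using a by (simp add: polynomial_def)
  have p2: "polynomial (carrier R) c" using c univ_poly_carrier by blast
  have "degree q = 1 + degree c"
    using poly_mult_degree_eq[OF carrier_is_subring p1 p2] cne qc by simp
  then have dc: "degree c = m" using q(4) by simp
  have "lead_coeff q = \<one> \<otimes> lead_coeff c"
    using poly_mult_lead_coeff[OF carrier_is_subring p1 p2] cne qc by simp
  then have lc: "lead_coeff c = \<one>" using q(3) cne p2
    by (cases c) (auto simp: polynomial_def)
  have cs: "set c \<subseteq> carrier R" using p2 polynomial_incl by blast
  have s1: "set [\<one>, \<ominus> a] \<subseteq> carrier R" using a by auto
  have ev: "eval q r = eval [\<one>, \<ominus> a] r \<otimes> eval c r" if "r \<in> carrier R" for r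
    using eval_poly_mult[OF s1 cs that] qc by simp
  have "eval [\<one>, \<ominus> a] a = \<zero>" using a by (simp add: r_neg)
  then have "eval q a = \<zero>" using ev[OF a] a cs by (simp add: eval_in_carrier)
  then have ar: "a \<ominus> \<alpha> \<in> K" using rq a by blast
  have "\<forall>r. r \<in> carrier R \<longrightarrow> eval c r = \<zero> \<longrightarrow> r \<ominus> \<alpha> \<in> K"
  proof (intro allI impI)
    fix r assume r: "r \<in> carrier R" and e: "eval c r = \<zero>"
    have "eval q r = \<zero>" using ev[OF r] e r s1 by (simp add: eval_in_carrier)
    then show "r \<ominus> \<alpha> \<in> K" using rq r by blast
  qed
  then show ?thesis using a c qc cne lc dc ar by blast
qed

lemma vieta_aux:
  assumes AC: "algebraically_closed R" and K: "subring K R" and al: "\<alpha> \<in> carrier R"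
  shows "q \<in> carrier (poly_ring R) \<Longrightarrow> q \<noteq> [] \<Longrightarrow> lead_coeff q = \<one> \<Longrightarrow> degree q = Suc m \<Longrightarrow>
         (\<forall>r\<in>carrier R. eval q r = \<zero> \<longrightarrow> r \<ominus> \<alpha> \<in> K) \<Longrightarrow> coeff q m \<oplus> [Suc m] \<cdot> \<alpha> \<in> K"
proof (induction m arbitrary: q)
  case (0 q)
  note q = "0.prems"
  obtain a c where a: "a \<in> carrier R" and c: "c \<in> carrier (poly_ring R)"
    and qc: "q = poly_mult [\<one>, \<ominus> a] c" and cne: "c \<noteq> []"
    and lc: "lead_coeff c = \<one>" and dc: "degree c = 0"
    and ar: "a \<ominus> \<alpha> \<in> K" and rts: "\<And>r. r \<in> carrier R \<Longrightarrow> eval c r = \<zero> \<Longrightarrow> r \<ominus> \<alpha> \<in> K"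
    using lin_factor[OF AC q(1-4) q(5)] by blast
  have cs: "set c \<subseteq> carrier R" using c univ_poly_carrier polynomial_incl by blast
  have c1: "c = [\<one>]" using cne lc dc by (cases c) auto
  have "coeff q 0 = \<ominus> a \<otimes> coeff c 0" using coeff_lin_mult0[OF a cs] qc by simp
  also have "coeff c 0 = \<one>" using c1 by simp
  finally have "coeff q 0 = \<ominus> a" using a by simp
  moreover have "\<ominus> a \<oplus> [Suc 0] \<cdot> \<alpha> = \<ominus> (a \<ominus> \<alpha>)"
    using a al by (simp add: a_minus_def minus_add a_comm)
  ultimately show ?case using ar K by (simp add: subringE(5))
next
  case (Suc m q)
  note q = "Suc.prems"
  obtain a c where a: "a \<in> carrier R" and c: "c \<in> carrier (poly_ring R)"
    and qc: "q = poly_mult [\<one>, \<ominus> a] c" and cne: "c \<noteq> []"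
    and lc: "lead_coeff c = \<one>" and dc: "degree c = Suc m"
    and ar: "a \<ominus> \<alpha> \<in> K" and rts: "\<And>r. r \<in> carrier R \<Longrightarrow> eval c r = \<zero> \<Longrightarrow> r \<ominus> \<alpha> \<in> K"
    using lin_factor[OF AC q(1-4) q(5)] by blast
  have cs: "set c \<subseteq> carrier R" using c univ_poly_carrier polynomial_incl by blast
  have IH: "coeff c m \<oplus> [Suc m] \<cdot> \<alpha> \<in> K"
    using Suc.IH[OF c cne lc dc] rts by blast
  have "coeff c (Suc m) = \<one>" using lc cne dc lead_coeff_simp[OF cne] by simp
  then have cq: "coeff q (Suc m) = coeff c m \<ominus> a"
    using coeff_lin_mult[OF a cs, of m] qc a by simp
  have cm: "coeff c m \<in> carrier R" using cs by simp
  have "coeff q (Suc m) \<oplus> [Suc (Suc m)] \<cdot> \<alpha> = (coeff c m \<oplus> [Suc m] \<cdot> \<alpha>) \<oplus> \<ominus> (a \<ominus> \<alpha>)"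
    unfolding cq using a al cm by (simp add: a_minus_def minus_add a_ac)
  then show ?case using IH ar K by (simp add: subringE(5,7))
qed

end

context field begin

lemma add_pow_one_in_subring:
  assumes "subring K R" shows "[(k::nat)] \<cdot> \<one> \<in> K"
proof (induction k)
  case 0 then show ?case using subringE(2)[OF assms] by simp
next
  case (Suc k) then show ?case using subringE(3,7)[OF assms] by simp
qed

lemma coeff_in_subring:
  assumes "set f \<subseteq> K" "subring K R" shows "coeff f i \<in> K"
proof (cases "i < length f")
  case True
  then have "coeff f i = f ! (length f - 1 - i)" by (rule coeff_nth)
  moreover have "length f - 1 - i < length f" using True by auto
  ultimately show ?thesis using assms(1) nth_mem by (metis subsetD)
next
  case False
  then show ?thesis using coeff_length[of f i] subringE(2)[OF assms(2)] by simp
qed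

lemma eval_poly_of_const: "a \<in> carrier R \<Longrightarrow> eval (poly_of_const a) x = a"
  by (cases "a = \<zero>") (auto simp: poly_of_const_def)

lemma AS_degree:
  assumes AC: "algebraically_closed R" and K: "subfield K R"
    and pr: "prime (p::nat)" and pc: "[p] \<cdot> \<one> = \<zero>"
    and al: "\<alpha> \<in> carrier R" and alK: "\<alpha> \<notin> K" and alg: "(algebraic over K) \<alpha>"
    and aK: "\<alpha> [^] p \<ominus> \<alpha> \<in> K"
  shows "degree (Irr K \<alpha>) = p"
proof -
  have Ks: "subring K R" using K subfieldE(1) by blast
  have KR: "K \<subseteq> carrier R" using subringE(1)[OF Ks] .
  define a where "a = \<alpha> [^] p \<ominus> \<alpha>"
  have aKa: "a \<in> K" using aK a_def by simp
  have ac: "a \<in> carrier R" using aKa KR by auto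
  let ?KX = "K[X]"
  let ?X = "[\<one>, \<zero>]"
  interpret KX: domain ?KX using univ_poly_is_domain[OF Ks] .
  have Xc: "?X \<in> carrier ?KX"
    using subringE(2,3)[OF Ks] by (simp add: univ_poly_carrier[symmetric] polynomial_def)
  have Cc: "poly_of_const a \<in> carrier ?KX"
    unfolding univ_poly_carrier[symmetric] poly_of_const_def
    using aKa normalize_gives_polynomial[of "[a]" K] by simp
  define g where "g = (?X [^]\<^bsub>?KX\<^esub> p \<ominus>\<^bsub>?KX\<^esub> ?X) \<ominus>\<^bsub>?KX\<^esub> poly_of_const a"
  have gc: "g \<in> carrier ?KX" unfolding g_def using Xc Cc by simp
  have E: "ring_hom_ring ?KX R (\<lambda>q. eval q y)" if "y \<in> carrier R" for y
    using eval_ring_hom[OF Ks that] .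
  have evg: "eval g y = (y [^] p \<ominus> y) \<ominus> a" if y: "y \<in> carrier R" for y
  proof -
    have hom: "(\<lambda>q. eval q y) \<in> ring_hom ?KX R" using ring_hom_ring.homh[OF E[OF y]] .
    have hc: "ring_hom_cring ?KX R (\<lambda>q. eval q y)"
      using ring_hom_cringI[OF KX.cring_axioms cring_axioms hom] .
    have ai: "\<And>q. q \<in> carrier ?KX \<Longrightarrow> eval (\<ominus>\<^bsub>?KX\<^esub> q) y = \<ominus> eval q y"
      using ring_hom_cring.hom_a_inv[OF hc] by blast
    have c1: "?X [^]\<^bsub>?KX\<^esub> p \<in> carrier ?KX" using Xc by simp
    have c2: "?X [^]\<^bsub>?KX\<^esub> p \<oplus>\<^bsub>?KX\<^esub> \<ominus>\<^bsub>?KX\<^esub> ?X \<in> carrier ?KX" using Xc by simp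
    have "eval g y = eval (?X [^]\<^bsub>?KX\<^esub> p \<oplus>\<^bsub>?KX\<^esub> \<ominus>\<^bsub>?KX\<^esub> ?X) y \<oplus> eval (\<ominus>\<^bsub>?KX\<^esub> poly_of_const a) y"
      unfolding g_def a_minus_def using ring_hom_add[OF hom c2] Cc by simp
    also have "eval (?X [^]\<^bsub>?KX\<^esub> p \<oplus>\<^bsub>?KX\<^esub> \<ominus>\<^bsub>?KX\<^esub> ?X) y = eval (?X [^]\<^bsub>?KX\<^esub> p) y \<oplus> eval (\<ominus>\<^bsub>?KX\<^esub> ?X) y"
      using ring_hom_add[OF hom c1] Xc by simp
    finally have "eval g y = eval (?X [^]\<^bsub>?KX\<^esub> p) y \<ominus> eval ?X y \<ominus> eval (poly_of_const a) y"
      unfolding a_minus_def using ai Xc Cc by simp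
    also have "eval (?X [^]\<^bsub>?KX\<^esub> p) y = (eval ?X y) [^] p"
      using ring_hom_ring.hom_nat_pow[OF E[OF y]] Xc by simp
    finally show ?thesis using y ac eval_poly_of_const[OF ac] by simp
  qed
  have deg: "degree g = p"
  proof -
    have d1: "degree (?X [^]\<^bsub>?KX\<^esub> p) = p"
      using subring_polynomial_pow_degree[OF Ks Xc, of p] by simp
    have d2: "degree (\<ominus>\<^bsub>?KX\<^esub> ?X) = 1"
      using univ_poly_a_inv_degree[OF Ks Xc] by simp
    have pa: "polynomial K (?X [^]\<^bsub>?KX\<^esub> p)" using Xc univ_poly_carrier by blast
    have pb: "polynomial K (\<ominus>\<^bsub>?KX\<^esub> ?X)" using Xc univ_poly_carrier by blast
    have ne: "degree (?X [^]\<^bsub>?KX\<^esub> p) \<noteq> degree (\<ominus>\<^bsub>?KX\<^esub> ?X)"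
      using d1 d2 prime_ge_2_nat[OF pr] by linarith
    define h where "h = ?X [^]\<^bsub>?KX\<^esub> p \<ominus>\<^bsub>?KX\<^esub> ?X"
    have hc: "h \<in> carrier ?KX" unfolding h_def using Xc by simp
    have "degree (poly_add (?X [^]\<^bsub>?KX\<^esub> p) (\<ominus>\<^bsub>?KX\<^esub> ?X)) = max p 1"
      using poly_add_degree_eq[OF Ks pa pb ne] d1 d2 by metis
    moreover have "h = poly_add (?X [^]\<^bsub>?KX\<^esub> p) (\<ominus>\<^bsub>?KX\<^esub> ?X)"
      unfolding h_def a_minus_def by (simp only: univ_poly_add)
    ultimately have dh: "degree h = p" using prime_ge_2_nat[OF pr] by (simp del: poly_add.simps)
    have d3: "degree (\<ominus>\<^bsub>?KX\<^esub> poly_of_const a) = 0"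
      using univ_poly_a_inv_degree[OF Ks Cc] by (simp add: poly_of_const_def)
    have pc1: "polynomial K h" using hc univ_poly_carrier by blast
    have pc2: "polynomial K (\<ominus>\<^bsub>?KX\<^esub> poly_of_const a)" using Cc univ_poly_carrier by blast
    have ne2: "degree h \<noteq> degree (\<ominus>\<^bsub>?KX\<^esub> poly_of_const a)"
      using dh d3 prime_ge_2_nat[OF pr] by linarith
    have "degree (poly_add h (\<ominus>\<^bsub>?KX\<^esub> poly_of_const a)) = max p 0"
      using poly_add_degree_eq[OF Ks pc1 pc2 ne2] dh d3 by metis
    moreover have "g = poly_add h (\<ominus>\<^bsub>?KX\<^esub> poly_of_const a)"
      unfolding g_def h_def a_minus_def by (simp only: univ_poly_add)
    ultimately show ?thesis using prime_ge_2_nat[OF pr] by (simp del: poly_add.simps)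
  qed
  have gne: "g \<noteq> []" using deg prime_ge_2_nat[OF pr] by auto
  define f where "f = Irr K \<alpha>"
  have fc: "f \<in> carrier ?KX" and firr: "pirreducible K f" and fl: "lead_coeff f = \<one>"
    and fa: "eval f \<alpha> = \<zero>"
    using IrrE[OF K al alg] unfolding f_def by auto
  have fne: "f \<noteq> []" using pirreducibleE(1)[OF Ks fc firr] .
  have "eval g \<alpha> = \<zero>" using evg[OF al] a_def ac by (simp add: r_neg a_minus_def)
  then have fdg: "f pdivides g" using Irr_minimal[OF K al alg gc] unfolding f_def by simp
  have dle: "degree f \<le> p" using pdivides_imp_degree_le[OF Ks fc gc gne fdg] deg by simp
  have fpol: "polynomial K f" using fc univ_poly_carrier by blast
  have fs: "set f \<subseteq> K" using fpol polynomial_incl by blast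
  have fcR: "f \<in> carrier (poly_ring R)"
    using fpol carrier_polynomial[OF Ks] univ_poly_carrier by blast
  have dpos: "degree f \<noteq> 0"
  proof
    assume "degree f = 0"
    then have "f = [\<one>]" using fne fl by (cases f) auto
    then show False using fa by simp
  qed
  then obtain m where dm: "degree f = Suc m" using not0_implies_Suc by blast
  have roots: "\<forall>r\<in>carrier R. eval f r = \<zero> \<longrightarrow> r \<ominus> \<alpha> \<in> K"
  proof (intro ballI impI)
    fix r assume r: "r \<in> carrier R" and fr: "eval f r = \<zero>"
    obtain h where hc: "h \<in> carrier (poly_ring R)" and gfh: "g = f \<otimes>\<^bsub>poly_ring R\<^esub> h"
      using fdg unfolding pdivides_def factor_def by blast
    have hs: "set h \<subseteq> carrier R" using hc univ_poly_carrier polynomial_incl by blast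
    have fsR: "set f \<subseteq> carrier R" using fs KR by auto
    have "eval g r = eval f r \<otimes> eval h r"
      using eval_poly_mult[OF fsR hs r] gfh by (simp add: univ_poly_mult)
    then have "eval g r = \<zero>" using fr hs r by (simp add: eval_in_carrier)
    then have e1: "(r [^] p \<ominus> r) \<ominus> a = \<zero>" using evg[OF r] by simp
    define u where "u = r \<ominus> \<alpha>"
    have uc: "u \<in> carrier R" unfolding u_def using r al by simp
    have ru: "r = u \<oplus> \<alpha>" unfolding u_def using r al by (simp add: a_minus_def a_assoc l_neg)
    have "r [^] p = u [^] p \<oplus> \<alpha> [^] p" unfolding ru by (rule frobenius_add[OF pr pc uc al])
    have rp: "r [^] p \<ominus> r = \<alpha> [^] p \<ominus> \<alpha>"
      using e1 a_def r al r_right_minus_eq[of "r [^] p \<ominus> r" a] ac by simp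
    have upc: "u [^] p \<in> carrier R" using uc by simp
    have apc: "\<alpha> [^] p \<in> carrier R" using al by simp
    have "r [^] p \<ominus> r = (u [^] p \<ominus> u) \<oplus> (\<alpha> [^] p \<ominus> \<alpha>)"
      unfolding frobenius_add[OF pr pc uc al, folded ru] using uc al upc apc ru
      by (simp add: a_minus_def minus_add a_ac)
    then have "(u [^] p \<ominus> u) \<oplus> (\<alpha> [^] p \<ominus> \<alpha>) = \<zero> \<oplus> (\<alpha> [^] p \<ominus> \<alpha>)"
      using rp apc al by simp
    then have "u [^] p \<ominus> u = \<zero>"
      using add.right_cancel[of "\<alpha> [^] p \<ominus> \<alpha>" "u [^] p \<ominus> u" \<zero>] apc al upc uc by simp
    then have "u [^] p = u" using r_right_minus_eq upc uc by simp
    then obtain k :: nat where "u = [k] \<cdot> \<one>" using xp_minus_x_roots[OF pr pc uc] by auto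
    then show "r \<ominus> \<alpha> \<in> K" using add_pow_one_in_subring[OF Ks] u_def by simp
  qed
  have "coeff f m \<oplus> [Suc m] \<cdot> \<alpha> \<in> K"
    using vieta_aux[OF AC Ks al fcR fne fl dm roots] .
  moreover have "coeff f m \<in> K" using coeff_in_subring[OF fs Ks] .
  ultimately have "\<ominus> coeff f m \<oplus> (coeff f m \<oplus> [Suc m] \<cdot> \<alpha>) \<in> K"
    using subringE(5,7)[OF Ks] by blast
  moreover have "\<ominus> coeff f m \<oplus> (coeff f m \<oplus> [Suc m] \<cdot> \<alpha>) = [Suc m] \<cdot> \<alpha>"
  proof -
    have cc: "coeff f m \<in> carrier R" using \<open>coeff f m \<in> K\<close> KR by auto
    have nc: "[Suc m] \<cdot> \<alpha> \<in> carrier R" using al by simp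
    show ?thesis by (metis a_assoc l_neg l_zero a_inv_closed cc nc)
  qed
  ultimately have dal: "[degree f] \<cdot> \<alpha> \<in> K" using dm by simp
  have "p dvd degree f"
  proof (rule ccontr)
    assume nd: "\<not> p dvd degree f"
    define r0 where "r0 = degree f mod p"
    have r0: "0 < r0" "r0 < p" unfolding r0_def using nd prime_gt_0_nat[OF pr] by (auto simp: dvd_eq_mod_eq_0 gr0I)
    have "degree f = p * (degree f div p) + r0" unfolding r0_def by simp
    then have "[degree f] \<cdot> \<one> = [(p * (degree f div p))] \<cdot> \<one> \<oplus> [r0] \<cdot> \<one>"
      by (metis add.nat_pow_mult one_closed)
    also have "[(p * (degree f div p))] \<cdot> \<one> = \<zero>" using char_mult_zero[OF pc] by simp
    finally have d1: "[degree f] \<cdot> \<one> = [r0] \<cdot> \<one>" by simp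
    have nz: "[degree f] \<cdot> \<one> \<noteq> \<zero>" using d1 char_exact[OF pr pc r0] by simp
    have dK: "[degree f] \<cdot> \<one> \<in> K" using add_pow_one_in_subring[OF Ks] .
    have "[degree f] \<cdot> \<alpha> = [degree f] \<cdot> \<one> \<otimes> \<alpha>" using add_pow_ldistr[of \<one> \<alpha>] al by simp
    then have "\<alpha> = inv ([degree f] \<cdot> \<one>) \<otimes> [degree f] \<cdot> \<alpha>"
      using nz al dK KR by (simp add: m_assoc[symmetric] field_Units)
    moreover have "inv ([degree f] \<cdot> \<one>) \<in> K" using subfield_m_inv(1)[OF K] dK nz by simp
    ultimately have "\<alpha> \<in> K" using dal subringE(6)[OF Ks] by metis
    then show False using alK by simp
  qed
  then show ?thesis using dle dpos unfolding f_def[symmetric]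
    by (metis dvd_imp_le le_antisym neq0_conv)
qed

end

context field begin

lemma eval_map_rev:
  assumes c: "\<And>i. i < m \<Longrightarrow> c i \<in> carrier R" and x: "x \<in> carrier R"
  shows "eval (map c (rev [0..<m])) x = (\<Oplus>i\<in>{..<m}. c i \<otimes> x [^] i)"
  using c
proof (induction m)
  case 0 then show ?case by simp
next
  case (Suc m)
  have "eval (map c (rev [0..<Suc m])) x = c m \<otimes> x [^] m \<oplus> eval (map c (rev [0..<m])) x"
    by simp
  also have "eval (map c (rev [0..<m])) x = (\<Oplus>i\<in>{..<m}. c i \<otimes> x [^] i)"
    using Suc by simp
  also have "c m \<otimes> x [^] m \<oplus> (\<Oplus>i\<in>{..<m}. c i \<otimes> x [^] i) = (\<Oplus>i\<in>{..<Suc m}. c i \<otimes> x [^] i)"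
    unfolding lessThan_Suc using Suc.prems x by (subst finsum_insert) auto
  finally show ?case .
qed

lemma Irr_degree_pos:
  assumes K: "subfield K R" and x: "x \<in> carrier R" and alg: "(algebraic over K) x"
  shows "degree (Irr K x) \<noteq> 0"
proof
  have Ks: "subring K R" using K subfieldE(1) by blast
  assume d0: "degree (Irr K x) = 0"
  have fne: "Irr K x \<noteq> []" using pirreducibleE(1)[OF Ks IrrE(1,2)[OF K x alg]] .
  then have "Irr K x = [\<one>]" using d0 IrrE(3)[OF K x alg] by (cases "Irr K x") auto
  then show False using IrrE(4)[OF K x alg] by simp
qed

lemma low_degree_in_base:
  assumes AC: "algebraically_closed R" and K: "subfield K R"
    and algall: "\<And>y. y \<in> carrier R \<Longrightarrow> (algebraic over K) y"
    and pr: "prime (p::nat)" and pc: "[p] \<cdot> \<one> = \<zero>"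
    and al: "\<alpha> \<in> carrier R" and alK: "\<alpha> \<notin> K"
    and aK: "\<alpha> [^] p \<ominus> \<alpha> \<in> K"
    and x: "x \<in> generate_field R (insert \<alpha> K)"
    and c: "\<And>i. i \<le> n \<Longrightarrow> c i \<in> K" and cn: "c n \<noteq> \<zero>"
    and ev: "(\<Oplus>i\<in>{..n}. c i \<otimes> x [^] i) = \<zero>" and np: "n < p"
  shows "x \<in> K"
proof -
  have Ks: "subring K R" using K subfieldE(1) by blast
  have KR: "K \<subseteq> carrier R" using subringE(1)[OF Ks] .
  define L where "L = simple_extension K \<alpha>"
  have algal: "(algebraic over K) \<alpha>" using algall[OF al] .
  have Lsf: "subfield L R" unfolding L_def using simple_extension_is_subfield[OF K al] algal by simp
  have KL: "K \<subseteq> L" unfolding L_def using simple_extension_incl[OF KR al] .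
  have aL: "\<alpha> \<in> L" unfolding L_def using simple_extension_mem[OF Ks al] .
  have "generate_field R (insert \<alpha> K) \<subseteq> L"
    using generate_field_min_subfield1[OF _ Lsf] KL aL KR al by auto
  then have xL: "x \<in> L" using x by auto
  have LR: "L \<subseteq> carrier R" using Lsf subfieldE(3) by blast
  have xc: "x \<in> carrier R" using xL LR by auto
  define Kx where "Kx = simple_extension K x"
  have algx: "(algebraic over K) x" using algall[OF xc] .
  have Kxsf: "subfield Kx R" unfolding Kx_def using simple_extension_is_subfield[OF K xc] algx by simp
  have KKx: "K \<subseteq> Kx" unfolding Kx_def using simple_extension_incl[OF KR xc] .
  have KxL: "Kx \<subseteq> L"
    unfolding Kx_def simple_extension_minimal[OF Ks xc]
    using Lsf subfieldE(1) KL xL by blast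
  have alg2: "(algebraic over Kx) \<alpha>" using algebraic_mono[OF KKx algal] .
  have LL: "simple_extension Kx \<alpha> = L"
  proof
    show "simple_extension Kx \<alpha> \<subseteq> L"
      using simple_extension_minimal[OF subfieldE(1)[OF Kxsf] al] Lsf subfieldE(1) KxL aL by blast
    show "L \<subseteq> simple_extension Kx \<alpha>"
      unfolding L_def simple_extension_minimal[OF Ks al]
      using simple_extension_is_subfield[OF Kxsf al] alg2 subfieldE(1)
        simple_extension_incl[of Kx \<alpha>] KKx simple_extension_mem[OF subfieldE(1)[OF Kxsf] al]
        subfieldE(3)[OF Kxsf] al by blast
  qed
  have fd1: "finite_dimension K Kx"
    unfolding Kx_def using finite_dimension_simple_extension[OF K xc] algx by simp
  have fd2: "finite_dimension Kx L"
    unfolding LL[symmetric] using finite_dimension_simple_extension[OF Kxsf al] alg2 by simp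
  have tower: "(dim over K) L = (dim over K) Kx * (dim over Kx) L"
    using telescopic_base_dim(2)[OF K Kxsf fd1 fd2] .
  have dL: "(dim over K) L = p"
    unfolding L_def simple_extension_dim[OF K al algal] using AS_degree[OF AC K pr pc al alK algal aK] .
  have dKx: "(dim over K) Kx = degree (Irr K x)"
    unfolding Kx_def using simple_extension_dim[OF K xc algx] .
  define P where "P = map c (rev [0..<Suc n])"
  have Ppol: "polynomial K P"
    unfolding P_def polynomial_def using c cn by (auto simp: upt_conv_Cons)
  have Pc: "P \<in> carrier (K[X])" using Ppol univ_poly_carrier by blast
  have Pne: "P \<noteq> []" unfolding P_def by simp
  have "eval P x = (\<Oplus>i\<in>{..<Suc n}. c i \<otimes> x [^] i)"
  proof -
    have cc: "\<And>i. i < Suc n \<Longrightarrow> c i \<in> carrier R" using c KR by (meson less_Suc_eq_le subsetD)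
    show ?thesis unfolding P_def using eval_map_rev[OF cc xc] .
  qed
  also have "\<dots> = \<zero>" using ev lessThan_Suc_atMost by simp
  finally have "eval P x = \<zero>" .
  then have "Irr K x pdivides P" using Irr_minimal[OF K xc algx Pc] by simp
  then have "degree (Irr K x) \<le> degree P"
    using pdivides_imp_degree_le[OF Ks IrrE(1)[OF K xc algx] Pc Pne] by simp
  then have dle: "degree (Irr K x) \<le> n" unfolding P_def by simp
  have dpos: "degree (Irr K x) \<noteq> 0" using Irr_degree_pos[OF K xc algx] .
  have "degree (Irr K x) dvd p" using tower dL dKx by (metis dvd_triv_left)
  then have d1: "degree (Irr K x) = 1"
    using pr dle np dpos by (metis prime_nat_iff not_less order.strict_trans1 le_less)
  obtain b where Ib: "Irr K x = [\<one>, b]"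
    using d1 IrrE(3)[OF K xc algx] by (cases "Irr K x" rule: list.exhaust) (auto simp: length_Suc_conv)
  have "set (Irr K x) \<subseteq> K" using IrrE(1)[OF K xc algx] univ_poly_carrier polynomial_incl by blast
  then have bK: "b \<in> K" using Ib by simp
  have "x \<oplus> b = \<zero>" using IrrE(4)[OF K xc algx] Ib xc bK KR by auto
  then have "x = \<ominus> b" using xc bK KR by (metis add.inv_equality a_comm subsetD)
  then show ?thesis using bK subringE(5)[OF Ks] by simp
qed

end

context field begin

lemma inv_mult_field:
  assumes x: "x \<in> carrier R" "x \<noteq> \<zero>" and y: "y \<in> carrier R" "y \<noteq> \<zero>"
  shows "inv (x \<otimes> y) = inv x \<otimes> inv y"
proof -
  have xu: "x \<in> Units R" and yu: "y \<in> Units R" using x y field_Units by auto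
  have "(x \<otimes> y) \<otimes> (inv x \<otimes> inv y) = (x \<otimes> inv x) \<otimes> (y \<otimes> inv y)"
    using x y xu yu by (simp add: m_ac)
  also have "\<dots> = \<one>" using xu yu by simp
  finally show ?thesis using x y xu yu by (intro comm_inv_char) auto
qed

lemma frac_add:
  assumes "a \<in> carrier R" "b \<in> carrier R" "b \<noteq> \<zero>" "c \<in> carrier R" "d \<in> carrier R" "d \<noteq> \<zero>"
  shows "a \<otimes> inv b \<oplus> c \<otimes> inv d = (a \<otimes> d \<oplus> c \<otimes> b) \<otimes> inv (b \<otimes> d)"
proof -
  have bu: "b \<in> Units R" and du: "d \<in> Units R" using assms field_Units by auto
  have "(a \<otimes> d \<oplus> c \<otimes> b) \<otimes> inv (b \<otimes> d) = (a \<otimes> d \<oplus> c \<otimes> b) \<otimes> (inv b \<otimes> inv d)"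
    using inv_mult_field assms by simp
  also have "\<dots> = (a \<otimes> d) \<otimes> (inv b \<otimes> inv d) \<oplus> (c \<otimes> b) \<otimes> (inv b \<otimes> inv d)"
    using assms bu du by (simp add: l_distr)
  also have "(a \<otimes> d) \<otimes> (inv b \<otimes> inv d) = a \<otimes> inv b"
  proof -
    have ib: "inv b \<in> carrier R" "inv d \<in> carrier R" using bu du by auto
    have "(a \<otimes> d) \<otimes> (inv b \<otimes> inv d) = (a \<otimes> inv b) \<otimes> (d \<otimes> inv d)"
      using assms ib by (metis m_assoc m_comm m_closed)
    then show ?thesis using du assms ib by simp
  qed
  also have "(c \<otimes> b) \<otimes> (inv b \<otimes> inv d) = c \<otimes> inv d"
  proof -
    have ib: "inv b \<in> carrier R" "inv d \<in> carrier R" using bu du by auto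
    have "(c \<otimes> b) \<otimes> (inv b \<otimes> inv d) = c \<otimes> ((b \<otimes> inv b) \<otimes> inv d)"
      using assms ib by (metis m_assoc m_closed)
    then show ?thesis using bu assms ib by simp
  qed
  finally show ?thesis by simp
qed

lemma frac_mult:
  assumes "a \<in> carrier R" "b \<in> carrier R" "b \<noteq> \<zero>" "c \<in> carrier R" "d \<in> carrier R" "d \<noteq> \<zero>"
  shows "(a \<otimes> inv b) \<otimes> (c \<otimes> inv d) = (a \<otimes> c) \<otimes> inv (b \<otimes> d)"
proof -
  have bu: "b \<in> Units R" and du: "d \<in> Units R" using assms field_Units by auto
  show ?thesis using inv_mult_field assms bu du by (simp add: m_ac)
qed

lemma frac_inv:
  assumes "a \<in> carrier R" "a \<noteq> \<zero>" "b \<in> carrier R" "b \<noteq> \<zero>"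
  shows "inv (a \<otimes> inv b) = b \<otimes> inv a"
proof -
  have au: "a \<in> Units R" and bu: "b \<in> Units R" using assms field_Units by auto
  have "inv b \<noteq> \<zero>" using bu by (metis Units_inv_Units field_Units DiffE insertI1 singletonD)
  then have "inv (a \<otimes> inv b) = inv a \<otimes> inv (inv b)"
    using inv_mult_field assms bu by simp
  then show ?thesis using au bu m_comm[OF Units_inv_closed[OF au], of b] assms(3) by simp
qed

end

locale tfield = field R for R (structure) +
  fixes F t
  assumes F: "subfield F R" and t: "t \<in> carrier R" and tr: "(transcendental over F) t"
begin

lemma Fs: "subring F R" using F subfieldE(1) by blast
lemma FR: "F \<subseteq> carrier R" using subringE(1)[OF Fs] .

lemma evhom: "ring_hom_ring (F[X]) R (\<lambda>P. eval P t)"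
  using eval_ring_hom[OF Fs t] .

lemma FX: "domain (F[X])" using univ_poly_is_domain[OF Fs] .

lemma FXr: "ring (F[X])" using univ_poly_is_ring[OF Fs] .

lemma FX_add[simp]: "P \<in> carrier (F[X]) \<Longrightarrow> Q \<in> carrier (F[X]) \<Longrightarrow> P \<oplus>\<^bsub>F[X]\<^esub> Q \<in> carrier (F[X])"
  using ring.ring_simprules(1)[OF FXr] by blast
lemma FX_mult[simp]: "P \<in> carrier (F[X]) \<Longrightarrow> Q \<in> carrier (F[X]) \<Longrightarrow> P \<otimes>\<^bsub>F[X]\<^esub> Q \<in> carrier (F[X])"
  using ring.ring_simprules(5)[OF FXr] by blast
lemma FX_neg[simp]: "P \<in> carrier (F[X]) \<Longrightarrow> \<ominus>\<^bsub>F[X]\<^esub> P \<in> carrier (F[X])"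
  using ring.ring_simprules(3)[OF FXr] by blast
lemma FX_pow[simp]: "P \<in> carrier (F[X]) \<Longrightarrow> P [^]\<^bsub>F[X]\<^esub> (n::nat) \<in> carrier (F[X])"
  using monoid.nat_pow_closed[OF ring.is_monoid[OF FXr]] by blast
lemma FX_zero[simp]: "[] \<in> carrier (F[X])" by (rule univ_poly_zero_closed)

lemma one_FX: "[\<one>] \<in> carrier (F[X])"
  using one_is_polynomial[OF Fs] univ_poly_carrier by blast

lemma evhom2: "ring_hom_cring (F[X]) R (\<lambda>P. eval P t)"
  using ring_hom_cringI[OF domain.axioms(1)[OF FX] cring_axioms ring_hom_ring.homh[OF evhom]] .

lemma ev_carrier: "P \<in> carrier (F[X]) \<Longrightarrow> eval P t \<in> carrier R"
  using ring_hom_memE(1)[OF ring_hom_ring.homh[OF evhom]] by blast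

lemma ev_zero_iff: "P \<in> carrier (F[X]) \<Longrightarrow> eval P t = \<zero> \<longleftrightarrow> P = []"
  using eval_transcendental[OF tr] by auto

lemma ev_add: "P \<in> carrier (F[X]) \<Longrightarrow> Q \<in> carrier (F[X]) \<Longrightarrow>
   eval (P \<oplus>\<^bsub>F[X]\<^esub> Q) t = eval P t \<oplus> eval Q t"
  using ring_hom_add[OF ring_hom_ring.homh[OF evhom]] by blast

lemma ev_mult: "P \<in> carrier (F[X]) \<Longrightarrow> Q \<in> carrier (F[X]) \<Longrightarrow>
   eval (P \<otimes>\<^bsub>F[X]\<^esub> Q) t = eval P t \<otimes> eval Q t"
  using ring_hom_mult[OF ring_hom_ring.homh[OF evhom]] by blast

lemma ev_neg: "P \<in> carrier (F[X]) \<Longrightarrow> eval (\<ominus>\<^bsub>F[X]\<^esub> P) t = \<ominus> eval P t"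
  using ring_hom_cring.hom_a_inv[OF evhom2] by blast

lemma ev_one: "eval \<one>\<^bsub>F[X]\<^esub> t = \<one>"
  using ring_hom_one[OF ring_hom_ring.homh[OF evhom]] .

lemma ev_pow: "P \<in> carrier (F[X]) \<Longrightarrow> eval (P [^]\<^bsub>F[X]\<^esub> (n::nat)) t = eval P t [^] n"
  using ring_hom_ring.hom_nat_pow[OF evhom] by blast

definition K where "K = generate_field R (insert t F)"

definition isfrac where
  "isfrac y \<longleftrightarrow> (\<exists>A B. A \<in> carrier (F[X]) \<and> B \<in> carrier (F[X]) \<and> B \<noteq> [] \<and> y = eval A t \<otimes> inv (eval B t))"

lemma isfrac_K: "y \<in> K \<Longrightarrow> isfrac y"
  unfolding K_def
proof (induction y rule: generate_field.induct)
  case one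
  show ?case unfolding isfrac_def
    by (rule exI[of _ "\<one>\<^bsub>F[X]\<^esub>"], rule exI[of _ "\<one>\<^bsub>F[X]\<^esub>"])
      (auto simp: ev_one univ_poly_one one_FX)
next
  case (incl h)
  show ?case
  proof (cases "h = t")
    case True
    have X: "[\<one>, \<zero>] \<in> carrier (F[X])"
      using subringE(2,3)[OF Fs] by (simp add: univ_poly_carrier[symmetric] polynomial_def)
    have "h = eval [\<one>, \<zero>] t \<otimes> inv (eval [\<one>] t)" using True t by simp
    then show ?thesis unfolding isfrac_def using X one_FX by blast
  next
    case False
    then have hF: "h \<in> F" using incl by simp
    have hc: "h \<in> carrier R" using hF FR by auto
    have C: "poly_of_const h \<in> carrier (F[X])"
      unfolding univ_poly_carrier[symmetric] poly_of_const_def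
      using hF normalize_gives_polynomial[of "[h]" F] by simp
    have "h = eval (poly_of_const h) t \<otimes> inv (eval [\<one>] t)"
      using eval_poly_of_const[OF hc] hc by simp
    then show ?thesis unfolding isfrac_def using C one_FX by blast
  qed
next
  case (a_inv h)
  then obtain A B where AB: "A \<in> carrier (F[X])" "B \<in> carrier (F[X])" "B \<noteq> []" "h = eval A t \<otimes> inv (eval B t)"
    unfolding isfrac_def by blast
  have "eval B t \<noteq> \<zero>" using ev_zero_iff AB by blast
  then have "inv (eval B t) \<in> carrier R" using ev_carrier AB field_Units by auto
  then have "\<ominus> h = eval (\<ominus>\<^bsub>F[X]\<^esub> A) t \<otimes> inv (eval B t)"
    using AB ev_neg ev_carrier by (simp add: l_minus)
  moreover have "\<ominus>\<^bsub>F[X]\<^esub> A \<in> carrier (F[X])"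
    using AB by simp
  ultimately show ?case unfolding isfrac_def using AB by blast
next
  case (eng_add h1 h2)
  obtain A1 B1 where 1: "A1 \<in> carrier (F[X])" "B1 \<in> carrier (F[X])" "B1 \<noteq> []" "h1 = eval A1 t \<otimes> inv (eval B1 t)"
    using eng_add.IH(1) unfolding isfrac_def by blast
  obtain A2 B2 where 2: "A2 \<in> carrier (F[X])" "B2 \<in> carrier (F[X])" "B2 \<noteq> []" "h2 = eval A2 t \<otimes> inv (eval B2 t)"
    using eng_add.IH(2) unfolding isfrac_def by blast
  have n1: "eval B1 t \<noteq> \<zero>" and n2: "eval B2 t \<noteq> \<zero>" using ev_zero_iff 1 2 by auto
  have nB: "eval (B1 \<otimes>\<^bsub>F[X]\<^esub> B2) t \<noteq> \<zero>" using ev_mult[OF 1(2) 2(2)] integral[OF _ ev_carrier[OF 1(2)] ev_carrier[OF 2(2)]] n1 n2 by auto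
  then have Bne: "B1 \<otimes>\<^bsub>F[X]\<^esub> B2 \<noteq> []" by auto
  have "h1 \<oplus> h2 = eval ((A1 \<otimes>\<^bsub>F[X]\<^esub> B2) \<oplus>\<^bsub>F[X]\<^esub> (A2 \<otimes>\<^bsub>F[X]\<^esub> B1)) t \<otimes> inv (eval (B1 \<otimes>\<^bsub>F[X]\<^esub> B2) t)"
    using frac_add[OF ev_carrier[OF 1(1)] ev_carrier[OF 1(2)] n1 ev_carrier[OF 2(1)] ev_carrier[OF 2(2)] n2]
      1 2 by (simp add: ev_add ev_mult)
  then show ?case unfolding isfrac_def using 1 2 Bne
    by (intro exI[of _ "(A1 \<otimes>\<^bsub>F[X]\<^esub> B2) \<oplus>\<^bsub>F[X]\<^esub> (A2 \<otimes>\<^bsub>F[X]\<^esub> B1)"] exI[of _ "B1 \<otimes>\<^bsub>F[X]\<^esub> B2"]) simp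
next
  case (eng_mult h1 h2)
  obtain A1 B1 where 1: "A1 \<in> carrier (F[X])" "B1 \<in> carrier (F[X])" "B1 \<noteq> []" "h1 = eval A1 t \<otimes> inv (eval B1 t)"
    using eng_mult.IH(1) unfolding isfrac_def by blast
  obtain A2 B2 where 2: "A2 \<in> carrier (F[X])" "B2 \<in> carrier (F[X])" "B2 \<noteq> []" "h2 = eval A2 t \<otimes> inv (eval B2 t)"
    using eng_mult.IH(2) unfolding isfrac_def by blast
  have n1: "eval B1 t \<noteq> \<zero>" and n2: "eval B2 t \<noteq> \<zero>" using ev_zero_iff 1 2 by auto
  have nB: "eval (B1 \<otimes>\<^bsub>F[X]\<^esub> B2) t \<noteq> \<zero>" using ev_mult[OF 1(2) 2(2)] integral[OF _ ev_carrier[OF 1(2)] ev_carrier[OF 2(2)]] n1 n2 by auto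
  then have Bne: "B1 \<otimes>\<^bsub>F[X]\<^esub> B2 \<noteq> []" by auto
  have "h1 \<otimes> h2 = eval (A1 \<otimes>\<^bsub>F[X]\<^esub> A2) t \<otimes> inv (eval (B1 \<otimes>\<^bsub>F[X]\<^esub> B2) t)"
    using frac_mult[OF ev_carrier[OF 1(1)] ev_carrier[OF 1(2)] n1 ev_carrier[OF 2(1)] ev_carrier[OF 2(2)] n2]
      1 2 by (simp add: ev_mult)
  then show ?case unfolding isfrac_def using 1 2 Bne
    by (intro exI[of _ "A1 \<otimes>\<^bsub>F[X]\<^esub> A2"] exI[of _ "B1 \<otimes>\<^bsub>F[X]\<^esub> B2"]) simp
next
  case (m_inv h)
  obtain A B where 1: "A \<in> carrier (F[X])" "B \<in> carrier (F[X])" "B \<noteq> []" "h = eval A t \<otimes> inv (eval B t)"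
    using m_inv.IH unfolding isfrac_def by blast
  have n1: "eval B t \<noteq> \<zero>" using ev_zero_iff 1 by auto
  have ic: "inv (eval B t) \<in> carrier R"
    using n1 ev_carrier[OF 1(2)] field_Units Units_inv_closed by auto
  have n2: "eval A t \<noteq> \<zero>" using m_inv.hyps(2) 1 ic by auto
  then have Ane: "A \<noteq> []" by auto
  have "inv h = eval B t \<otimes> inv (eval A t)"
    using frac_inv[OF ev_carrier[OF 1(1)] n2 ev_carrier[OF 1(2)] n1] 1 by simp
  then show ?case unfolding isfrac_def using 1 Ane by blast
qed
end

context tfield begin

definition PolT where "PolT = (\<lambda>P. eval P t) ` carrier (F[X])"

lemma PolT_subring: "subring PolT R"
  unfolding PolT_def using ring_hom_ring.img_is_subring[OF evhom ring.carrier_is_subring[OF FXr]] .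

lemma PolT_carrier: "PolT \<subseteq> carrier R" using subringE(1)[OF PolT_subring] .

lemma PolT_I: "P \<in> carrier (F[X]) \<Longrightarrow> eval P t \<in> PolT" unfolding PolT_def by blast

lemma PolT_E: "y \<in> PolT \<Longrightarrow> (\<And>P. P \<in> carrier (F[X]) \<Longrightarrow> y = eval P t \<Longrightarrow> thesis) \<Longrightarrow> thesis"
  unfolding PolT_def by blast

lemma PolT_add: "a \<in> PolT \<Longrightarrow> b \<in> PolT \<Longrightarrow> a \<oplus> b \<in> PolT" using subringE(7)[OF PolT_subring] .
lemma PolT_mult: "a \<in> PolT \<Longrightarrow> b \<in> PolT \<Longrightarrow> a \<otimes> b \<in> PolT" using subringE(6)[OF PolT_subring] .
lemma PolT_neg: "a \<in> PolT \<Longrightarrow> \<ominus> a \<in> PolT" using subringE(5)[OF PolT_subring] .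
lemma PolT_zero: "\<zero> \<in> PolT" using subringE(2)[OF PolT_subring] .
lemma PolT_one: "\<one> \<in> PolT" using subringE(3)[OF PolT_subring] .
lemma PolT_pow: "a \<in> PolT \<Longrightarrow> a [^] (n::nat) \<in> PolT"
  by (induction n) (auto intro: PolT_mult PolT_one)

lemma PolT_finsum: "finite I \<Longrightarrow> (\<And>i. i \<in> I \<Longrightarrow> f i \<in> PolT) \<Longrightarrow> finsum R f I \<in> PolT"
proof (induction I rule: finite_induct)
  case empty then show ?case using PolT_zero by simp
next
  case (insert j I)
  have "f \<in> insert j I \<rightarrow> carrier R" using insert.prems PolT_carrier by auto
  then have "finsum R f (insert j I) = f j \<oplus> finsum R f I"
    using insert.hyps by (simp add: finsum_insert)
  then show ?case using insert PolT_add by simp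
qed

lemma integral_closed:
  fixes n :: nat
  assumes z: "z \<in> carrier R" and zf: "isfrac z"
    and f: "\<And>i. i < n \<Longrightarrow> f i \<in> PolT" and n: "0 < n"
    and eq: "z [^] n \<oplus> (\<Oplus>i\<in>{..<n}. f i \<otimes> z [^] i) = \<zero>"
  shows "z \<in> PolT"
proof -
  define J where "J = {U \<in> carrier (F[X]). eval U t \<otimes> z \<in> PolT}"
  obtain A0 B0 where AB0: "A0 \<in> carrier (F[X])" "B0 \<in> carrier (F[X])" "B0 \<noteq> []"
    "z = eval A0 t \<otimes> inv (eval B0 t)" using zf unfolding isfrac_def by blast
  have B0n: "eval B0 t \<noteq> \<zero>" using ev_zero_iff AB0 by auto
  have B0u: "eval B0 t \<in> Units R" using B0n ev_carrier[OF AB0(2)] field_Units by auto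
  have "eval B0 t \<otimes> z = eval A0 t"
    using AB0 B0u ev_carrier[OF AB0(1)] by (metis Units_closed Units_inv_closed Units_r_inv m_lcomm r_one)
  then have B0J: "B0 \<in> J" unfolding J_def using AB0 PolT_I by simp
  define d0 where "d0 = (LEAST d. \<exists>B\<in>J. B \<noteq> [] \<and> degree B = d)"
  have "\<exists>B\<in>J. B \<noteq> [] \<and> degree B = d0"
    unfolding d0_def by (rule LeastI[of _ "degree B0"]) (use B0J AB0 in blast)
  then obtain B where BJ: "B \<in> J" and Bne: "B \<noteq> []" and dB: "degree B = d0" by blast
  have minB: "degree B \<le> degree U" if "U \<in> J" "U \<noteq> []" for U
    unfolding dB d0_def by (rule Least_le) (use that in blast)
  have Bc: "B \<in> carrier (F[X])" using BJ J_def by auto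
  have Bn: "eval B t \<noteq> \<zero>" using ev_zero_iff Bc Bne by auto
  have Bec: "eval B t \<in> carrier R" using ev_carrier[OF Bc] .
  have divJ: "\<exists>Q\<in>carrier (F[X]). eval U t = eval B t \<otimes> eval Q t" if U: "U \<in> J" for U
  proof -
    have Uc: "U \<in> carrier (F[X])" using U J_def by auto
    obtain q r where qr: "q \<in> carrier (F[X])" "r \<in> carrier (F[X])"
      "U = (B \<otimes>\<^bsub>F[X]\<^esub> q) \<oplus>\<^bsub>F[X]\<^esub> r" "r = \<zero>\<^bsub>F[X]\<^esub> \<or> degree r < degree B"
      using subfield_long_division_theorem_shell[OF F Uc Bc] Bne by (auto simp: univ_poly_zero)
    have evU: "eval U t = eval B t \<otimes> eval q t \<oplus> eval r t"
      using qr Bc by (simp add: ev_add ev_mult)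
    have qc: "eval q t \<in> carrier R" and rc: "eval r t \<in> carrier R" using ev_carrier qr by auto
    have "eval r t = \<ominus> (eval B t \<otimes> eval q t) \<oplus> eval U t"
      using add.inv_solve_left[of "eval r t" "eval B t \<otimes> eval q t" "eval U t"] evU qc rc Bec ev_carrier[OF Uc]
      by simp
    then have "eval r t = eval U t \<ominus> eval B t \<otimes> eval q t"
      using qc Bec ev_carrier[OF Uc] by (simp add: a_minus_def a_comm)
    then have "eval r t \<otimes> z = eval U t \<otimes> z \<ominus> eval q t \<otimes> (eval B t \<otimes> z)"
      using qc Bec z ev_carrier[OF Uc] by (simp add: a_minus_def l_distr l_minus r_distr r_minus m_ac)
    moreover have "eval U t \<otimes> z \<in> PolT" using U J_def by auto
    moreover have "eval B t \<otimes> z \<in> PolT" using BJ J_def by auto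
    moreover have "eval q t \<in> PolT" using PolT_I qr by auto
    ultimately have "eval r t \<otimes> z \<in> PolT"
      unfolding a_minus_def using PolT_add PolT_neg PolT_mult by simp
    then have rJ: "r \<in> J" unfolding J_def using qr by simp
    have "r = []"
    proof (rule ccontr)
      assume "r \<noteq> []"
      then show False using minB[OF rJ] qr(4) by (auto simp: univ_poly_zero)
    qed
    then have "eval U t = eval B t \<otimes> eval q t" using evU Bec qc by simp
    then show ?thesis using qr by blast
  qed
  obtain Ap where Ap: "Ap \<in> carrier (F[X])" "eval B t \<otimes> z = eval Ap t"
    using BJ unfolding J_def by (blast elim: PolT_E)
  define A where "A = eval Ap t"
  have Ac: "A \<in> carrier R" unfolding A_def using ev_carrier[OF Ap(1)] .
  have down: "A [^] (n - 1 - k) \<otimes> z \<in> PolT" if "k \<le> n - 1" for k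
    using that
  proof (induction k)
    case 0
    define b where "b = eval B t"
    have bc: "b \<in> carrier R" unfolding b_def using Bec .
    have bP: "b \<in> PolT" unfolding b_def using PolT_I[OF Bc] .
    have AP: "A \<in> PolT" unfolding A_def using PolT_I[OF Ap(1)] .
    have Abz: "A = b \<otimes> z" unfolding A_def b_def using Ap(2) by simp
    have fc: "\<And>i. i < n \<Longrightarrow> f i \<in> carrier R" using f PolT_carrier by auto
    define S where "S = (\<Oplus>i\<in>{..<n}. f i \<otimes> z [^] i)"
    have Sc: "S \<in> carrier R" unfolding S_def using fc z by (intro finsum_closed) auto
    have zS: "z [^] n = \<ominus> S"
      using add.inv_equality[of "z [^] n" S] eq Sc z unfolding S_def by simp
    have "A [^] (n - 1 - 0) \<otimes> z = b [^] (n - 1) \<otimes> z [^] (n - 1) \<otimes> z"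
      using Abz bc z by (simp add: nat_pow_distrib)
    also have "\<dots> = b [^] (n - 1) \<otimes> z [^] n"
      using bc z n by (simp add: m_assoc nat_pow_Suc[symmetric])
    also have "\<dots> = \<ominus> (b [^] (n - 1) \<otimes> S)" using zS bc Sc by (simp add: r_minus)
    also have "b [^] (n - 1) \<otimes> S = (\<Oplus>i\<in>{..<n}. b [^] (n - 1) \<otimes> (f i \<otimes> z [^] i))"
      unfolding S_def using bc fc z by (intro finsum_rdistr) auto
    also have "\<dots> = (\<Oplus>i\<in>{..<n}. f i \<otimes> A [^] i \<otimes> b [^] (n - 1 - i))"
    proof (rule finsum_cong')
      fix i assume i: "i \<in> {..<n}"
      have "b [^] (n - 1) = b [^] i \<otimes> b [^] (n - 1 - i)"
        using i bc by (simp add: nat_pow_mult)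
      then show "b [^] (n - 1) \<otimes> (f i \<otimes> z [^] i) = f i \<otimes> A [^] i \<otimes> b [^] (n - 1 - i)"
        using i bc z fc[of i] Abz by (simp add: nat_pow_distrib m_ac)
    qed (use fc bc AP PolT_carrier in auto)
    finally have "A [^] (n - 1 - 0) \<otimes> z = \<ominus> (\<Oplus>i\<in>{..<n}. f i \<otimes> A [^] i \<otimes> b [^] (n - 1 - i))" .
    moreover have "(\<Oplus>i\<in>{..<n}. f i \<otimes> A [^] i \<otimes> b [^] (n - 1 - i)) \<in> PolT"
      using f AP bP by (intro PolT_finsum) (auto intro: PolT_mult PolT_pow)
    ultimately show ?case using PolT_neg by simp
  next
    case (Suc k)
    define m where "m = n - 1 - Suc k"
    have mk: "n - 1 - k = Suc m" using Suc.prems unfolding m_def by simp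
    have "A [^] Suc m \<otimes> z \<in> PolT" using Suc mk by simp
    moreover have e: "eval (Ap [^]\<^bsub>F[X]\<^esub> Suc m) t = A [^] Suc m"
      using ev_pow[OF Ap(1)] A_def by blast
    moreover have "Ap [^]\<^bsub>F[X]\<^esub> Suc m \<in> carrier (F[X])" using FX_pow[OF Ap(1)] .
    ultimately have UJ: "Ap [^]\<^bsub>F[X]\<^esub> Suc m \<in> J"
      unfolding J_def mem_Collect_eq by metis
    obtain Q where Q: "Q \<in> carrier (F[X])" "eval (Ap [^]\<^bsub>F[X]\<^esub> Suc m) t = eval B t \<otimes> eval Q t"
      using divJ[OF UJ] by blast
    have Qc: "eval Q t \<in> carrier R" using ev_carrier Q by auto
    have "eval B t \<otimes> (A [^] m \<otimes> z) = A [^] m \<otimes> (eval B t \<otimes> z)"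
      using Bec Ac z by (simp add: m_lcomm)
    also have "\<dots> = A [^] Suc m" using Ap(2) A_def Ac by (simp add: nat_pow_Suc2 m_comm)
    also have "\<dots> = eval B t \<otimes> eval Q t" using Q(2) e by simp
    finally have "A [^] m \<otimes> z = eval Q t"
      using m_lcancel[OF Bn Bec, of "A [^] m \<otimes> z" "eval Q t"] Ac z Qc by simp
    then show ?case using PolT_I[OF Q(1)] m_def by simp
  qed
  show ?thesis using down[of "n - 1"] z by simp
qed

end

context field begin

lemma monic_transform:
  fixes n :: nat
  assumes x: "x \<in> carrier R" and E: "\<And>i. i \<le> n \<Longrightarrow> Ee i \<in> carrier R"
    and eq: "(\<Oplus>i\<in>{..n}. Ee i \<otimes> x [^] i) = \<zero>" and n: "0 < n"
  shows "(Ee n \<otimes> x) [^] n \<oplus> (\<Oplus>i\<in>{..<n}. (Ee i \<otimes> Ee n [^] (n - 1 - i)) \<otimes> (Ee n \<otimes> x) [^] i) = \<zero>"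
proof -
  define c where "c = Ee n"
  have cc: "c \<in> carrier R" unfolding c_def using E by simp
  have Ec: "\<And>i. i < n \<Longrightarrow> Ee i \<in> carrier R" using E by simp
  define S where "S = (\<Oplus>i\<in>{..<n}. Ee i \<otimes> x [^] i)"
  have Sc: "S \<in> carrier R" unfolding S_def using Ec x by (intro finsum_closed) auto
  have "(\<Oplus>i\<in>{..n}. Ee i \<otimes> x [^] i) = c \<otimes> x [^] n \<oplus> S"
    unfolding S_def c_def atMost_Suc lessThan_Suc_atMost[symmetric] lessThan_Suc
    using E x by (subst finsum_insert) auto
  then have e1: "c \<otimes> x [^] n \<oplus> S = \<zero>" using eq by simp
  have "c [^] (n - 1) \<otimes> (c \<otimes> x [^] n \<oplus> S) = \<zero>" using e1 cc by simp
  then have e2: "c [^] (n - 1) \<otimes> (c \<otimes> x [^] n) \<oplus> c [^] (n - 1) \<otimes> S = \<zero>"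
    using cc x Sc by (simp add: r_distr)
  have t1: "c [^] (n - 1) \<otimes> (c \<otimes> x [^] n) = (c \<otimes> x) [^] n"
  proof -
    have "c [^] (n - 1) \<otimes> c = c [^] n" using n cc by (metis Suc_diff_1 nat_pow_Suc)
    then show ?thesis using cc x by (simp add: nat_pow_distrib m_assoc[symmetric])
  qed
  have t2: "c [^] (n - 1) \<otimes> S = (\<Oplus>i\<in>{..<n}. (Ee i \<otimes> c [^] (n - 1 - i)) \<otimes> (c \<otimes> x) [^] i)"
  proof -
    have "c [^] (n - 1) \<otimes> S = (\<Oplus>i\<in>{..<n}. c [^] (n - 1) \<otimes> (Ee i \<otimes> x [^] i))"
      unfolding S_def using cc Ec x by (intro finsum_rdistr) auto
    also have "\<dots> = (\<Oplus>i\<in>{..<n}. (Ee i \<otimes> c [^] (n - 1 - i)) \<otimes> (c \<otimes> x) [^] i)"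
    proof (rule finsum_cong')
      fix i assume i: "i \<in> {..<n}"
      have "c [^] (n - 1) = c [^] (n - 1 - i) \<otimes> c [^] i"
        using i cc by (simp add: nat_pow_mult)
      then show "c [^] (n - 1) \<otimes> (Ee i \<otimes> x [^] i) = (Ee i \<otimes> c [^] (n - 1 - i)) \<otimes> (c \<otimes> x) [^] i"
        using i cc x Ec[of i] by (simp add: nat_pow_distrib m_ac)
    qed (use Ec cc x in auto)
    finally show ?thesis .
  qed
  from e2 have "(c \<otimes> x) [^] n \<oplus> (\<Oplus>i\<in>{..<n}. (Ee i \<otimes> c [^] (n - 1 - i)) \<otimes> (c \<otimes> x) [^] i) = \<zero>"
    by (simp only: t1 t2)
  then show ?thesis unfolding c_def .
qed

end

context tfield begin

lemma FXam: "abelian_monoid (F[X])"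
  using ring.is_abelian_group[OF FXr] abelian_group.axioms(1) by blast

lemma pol_F: "P \<in> carrier (F[X]) \<Longrightarrow> polynomial F P" using univ_poly_carrier by blast

lemma deg_mult_le: "P \<in> carrier (F[X]) \<Longrightarrow> Q \<in> carrier (F[X]) \<Longrightarrow>
  degree (P \<otimes>\<^bsub>F[X]\<^esub> Q) \<le> degree P + degree Q"
  using poly_mult_degree_eq[OF Fs pol_F pol_F, of P Q] by (simp add: univ_poly_mult)

lemma deg_add_le: "degree (P \<oplus>\<^bsub>F[X]\<^esub> Q) \<le> max (degree P) (degree Q)"
  using poly_add_degree[of P Q] by (simp add: univ_poly_add)

lemma deg_neg: "P \<in> carrier (F[X]) \<Longrightarrow> degree (\<ominus>\<^bsub>F[X]\<^esub> P) = degree P"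
  using univ_poly_a_inv_degree[OF Fs] .

lemma deg_pow: "P \<in> carrier (F[X]) \<Longrightarrow> degree (P [^]\<^bsub>F[X]\<^esub> (k::nat)) = k * degree P"
  using subring_polynomial_pow_degree[OF Fs] .

lemma deg_finsum_le:
  assumes "finite I" "\<And>i. i \<in> I \<Longrightarrow> f i \<in> carrier (F[X])" "\<And>i. i \<in> I \<Longrightarrow> degree (f i) \<le> D"
  shows "degree (finsum (F[X]) f I) \<le> D"
  using assms
proof (induction I rule: finite_induct)
  case empty
  have "finsum (F[X]) f {} = []" using abelian_monoid.finsum_empty[OF FXam] univ_poly_zero by metis
  then show ?case by simp
next
  case (insert j I)
  have "finsum (F[X]) f (insert j I) = f j \<oplus>\<^bsub>F[X]\<^esub> finsum (F[X]) f I"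
    using abelian_monoid.finsum_insert[OF FXam insert.hyps] insert.prems by auto
  then show ?case using deg_add_le[of "f j" "finsum (F[X]) f I"] insert by fastforce
qed

lemma ev_finsum:
  assumes "\<And>i. i \<in> I \<Longrightarrow> f i \<in> carrier (F[X])"
  shows "eval (finsum (F[X]) f I) t = (\<Oplus>i\<in>I. eval (f i) t)"
  using ring_hom_cring.hom_finsum[OF evhom2, of f I] assms by (simp add: Pi_def comp_def)

lemma degree_bound:
  fixes n M :: nat
  assumes Y: "Yp \<in> carrier (F[X])"
    and gc: "\<And>i. i < n \<Longrightarrow> g i \<in> carrier (F[X])"
    and gd: "\<And>i. i < n \<Longrightarrow> degree (g i) \<le> (n - i) * M"
    and n: "0 < n"
    and eq: "eval Yp t [^] n \<oplus> (\<Oplus>i\<in>{..<n}. eval (g i) t \<otimes> eval Yp t [^] i) = \<zero>"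
  shows "degree Yp \<le> M"
proof (rule ccontr)
  assume "\<not> degree Yp \<le> M"
  then have MD: "M < degree Yp" by simp
  define D where "D = degree Yp"
  define S where "S = finsum (F[X]) (\<lambda>i. g i \<otimes>\<^bsub>F[X]\<^esub> Yp [^]\<^bsub>F[X]\<^esub> i) {..<n}"
  have "(\<lambda>i. g i \<otimes>\<^bsub>F[X]\<^esub> Yp [^]\<^bsub>F[X]\<^esub> i) \<in> {..<n} \<rightarrow> carrier (F[X])" using gc Y by auto
  then have Sc: "S \<in> carrier (F[X])"
    unfolding S_def by (rule abelian_monoid.finsum_closed[OF FXam])
  have "eval S t = (\<Oplus>i\<in>{..<n}. eval (g i \<otimes>\<^bsub>F[X]\<^esub> Yp [^]\<^bsub>F[X]\<^esub> i) t)"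
    unfolding S_def using gc Y by (intro ev_finsum) simp
  also have "\<dots> = (\<Oplus>i\<in>{..<n}. eval (g i) t \<otimes> eval Yp t [^] i)"
    using gc Y ev_carrier by (intro finsum_cong') (auto simp: ev_mult ev_pow)
  finally have eS: "eval S t = (\<Oplus>i\<in>{..<n}. eval (g i) t \<otimes> eval Yp t [^] i)" .
  have "eval (Yp [^]\<^bsub>F[X]\<^esub> n \<oplus>\<^bsub>F[X]\<^esub> S) t = \<zero>"
    using ev_add[of "Yp [^]\<^bsub>F[X]\<^esub> n" S] Y Sc eq eS ev_pow by simp
  then have "Yp [^]\<^bsub>F[X]\<^esub> n \<oplus>\<^bsub>F[X]\<^esub> S = \<zero>\<^bsub>F[X]\<^esub>"
    using ev_zero_iff Y Sc by (simp add: univ_poly_zero)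
  then have "\<ominus>\<^bsub>F[X]\<^esub> S = Yp [^]\<^bsub>F[X]\<^esub> n"
    using abelian_group.minus_equality[OF ring.is_abelian_group[OF FXr]] Y Sc by simp
  then have dS: "degree S = n * D" using deg_neg[OF Sc] deg_pow[OF Y] D_def by simp
  have "degree S \<le> n * D - 1"
    unfolding S_def
  proof (rule deg_finsum_le)
    fix i assume i: "i \<in> {..<n}"
    have "degree (g i \<otimes>\<^bsub>F[X]\<^esub> Yp [^]\<^bsub>F[X]\<^esub> i) \<le> degree (g i) + i * D"
      using deg_mult_le[OF gc FX_pow[OF Y]] deg_pow[OF Y] i D_def by fastforce
    also have "\<dots> \<le> (n - i) * M + i * D" using gd i by simp
    also have "\<dots> \<le> n * D - 1"
    proof -
      have ni: "1 \<le> n - i" using i by auto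
      have "(n - i) * M + 1 \<le> (n - i) * M + (n - i)" using ni by simp
      also have "\<dots> = (n - i) * (M + 1)" by (simp add: distrib_left)
      also have "\<dots> \<le> (n - i) * D" using MD D_def mult_le_mono2[of "M + 1" D "n - i"] by simp
      finally have "(n - i) * M + 1 + i * D \<le> (n - i) * D + i * D" by simp
      also have "\<dots> = n * D" using i by (simp add: algebra_simps)
      finally show ?thesis by simp
    qed
    finally show "degree (g i \<otimes>\<^bsub>F[X]\<^esub> Yp [^]\<^bsub>F[X]\<^esub> i) \<le> n * D - 1" .
  qed (use gc Y in auto)
  moreover have "0 < n * D" using n MD D_def by simp
  ultimately show False using dS by (metis diff_less le_antisym less_numeral_extra(1) nat_less_le)
qed

end

context tfield begin

lemma FXcm: "comm_monoid (F[X])"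
  using cring.axioms(2)[OF domain.axioms(1)[OF FX]] .

lemma deg_finprod_le:
  assumes "finite I" "\<And>i. i \<in> I \<Longrightarrow> f i \<in> carrier (F[X])" "\<And>i. i \<in> I \<Longrightarrow> degree (f i) \<le> D"
  shows "degree (finprod (F[X]) f I) \<le> card I * D"
  using assms
proof (induction I rule: finite_induct)
  case empty
  have "finprod (F[X]) f {} = [\<one>]" using comm_monoid.finprod_empty[OF FXcm] univ_poly_one by metis
  then show ?case by simp
next
  case (insert j I)
  have fc: "f \<in> I \<rightarrow> carrier (F[X])" using insert.prems by auto
  have e: "finprod (F[X]) f (insert j I) = f j \<otimes>\<^bsub>F[X]\<^esub> finprod (F[X]) f I"
    using comm_monoid.finprod_insert[OF FXcm insert.hyps fc] insert.prems by auto
  have pc: "finprod (F[X]) f I \<in> carrier (F[X])"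
    using comm_monoid.finprod_closed[OF FXcm fc] .
  have "degree (finprod (F[X]) f (insert j I)) \<le> degree (f j) + degree (finprod (F[X]) f I)"
    unfolding e using deg_mult_le[OF _ pc] insert.prems by auto
  also have "\<dots> \<le> D + card I * D" using insert by (intro add_mono) auto
  finally show ?case using insert.hyps by simp
qed

lemma ev_finprod:
  assumes "\<And>i. i \<in> I \<Longrightarrow> f i \<in> carrier (F[X])"
  shows "eval (finprod (F[X]) f I) t = (\<Otimes>i\<in>I. eval (f i) t)"
  using ring_hom_cring.hom_finprod[OF evhom2, of f I] assms by (simp add: Pi_def comp_def)

lemma finprod_nonzero:
  assumes "finite I" "\<And>i. i \<in> I \<Longrightarrow> g i \<in> carrier R" "\<And>i. i \<in> I \<Longrightarrow> g i \<noteq> \<zero>"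
  shows "finprod R g I \<noteq> \<zero>"
  using assms
proof (induction I rule: finite_induct)
  case empty then show ?case by simp
next
  case (insert j I)
  have gc: "g \<in> I \<rightarrow> carrier R" using insert.prems by auto
  have "finprod R g (insert j I) = g j \<otimes> finprod R g I"
    using finprod_insert[OF insert.hyps gc] insert.prems by auto
  moreover have c1: "finprod R g I \<in> carrier R" using finprod_closed[OF gc] .
  moreover have n1: "finprod R g I \<noteq> \<zero>" using insert by auto
  moreover have "g j \<in> carrier R" "g j \<noteq> \<zero>" using insert.prems by auto
  ultimately show ?case using integral by metis
qed

lemma list_poly:
  assumes "set a \<subseteq> F"
  shows "normalize a \<in> carrier (F[X])" "eval (normalize a) t = eval a t"
    "degree (normalize a) \<le> length a - 1"
proof -
  show "normalize a \<in> carrier (F[X])"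
    using normalize_gives_polynomial[OF assms] univ_poly_carrier by blast
  show "eval (normalize a) t = eval a t"
    using eval_normalize[of a t] assms FR t by auto
  show "degree (normalize a) \<le> length a - 1"
    using normalize_length_le[of a] by simp
qed

lemma poly_list:
  assumes "P \<in> carrier (F[X])" "degree P \<le> M"
  shows "set P \<subseteq> F" "length P \<le> Suc M"
  using assms pol_F polynomial_incl by (blast, cases P, auto)

lemma K_carrier: "K \<subseteq> carrier R"
  unfolding K_def using generate_field_incl t FR by auto

lemma bound_repr:
  fixes n N :: nat and a b :: "nat \<Rightarrow> 'a list"
  assumes x: "x \<in> K"
    and ab: "\<And>i. i \<le> n \<Longrightarrow> set (a i) \<subseteq> F \<and> length (a i) \<le> N \<and> set (b i) \<subseteq> F \<and> length (b i) \<le> N \<and> eval (b i) t \<noteq> \<zero>"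
    and cn: "eval (a n) t \<otimes> inv (eval (b n) t) \<noteq> \<zero>"
    and eq: "(\<Oplus>i\<in>{..n}. (eval (a i) t \<otimes> inv (eval (b i) t)) \<otimes> x [^] i) = \<zero>"
  shows "\<exists>A B. set A \<subseteq> F \<and> set B \<subseteq> F \<and> length A \<le> Suc (Suc n * N) \<and> length B \<le> Suc (Suc n * N)
     \<and> eval B t \<noteq> \<zero> \<and> x = eval A t \<otimes> inv (eval B t)"
proof -
  define M where "M = Suc n * N"
  have xc: "x \<in> carrier R" using x K_carrier by auto
  define na where "na = (\<lambda>i. normalize (a i))"
  define nb where "nb = (\<lambda>i. normalize (b i))"
  have nac: "\<And>i. i \<le> n \<Longrightarrow> na i \<in> carrier (F[X])" and nae: "\<And>i. i \<le> n \<Longrightarrow> eval (na i) t = eval (a i) t"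
    and nad: "\<And>i. i \<le> n \<Longrightarrow> degree (na i) \<le> N"
    unfolding na_def using list_poly ab by (fastforce)+
  have nbc: "\<And>i. i \<le> n \<Longrightarrow> nb i \<in> carrier (F[X])" and nbe: "\<And>i. i \<le> n \<Longrightarrow> eval (nb i) t = eval (b i) t"
    and nbd: "\<And>i. i \<le> n \<Longrightarrow> degree (nb i) \<le> N"
    unfolding nb_def using list_poly ab by (fastforce)+
  define bv where "bv = (\<lambda>i. eval (b i) t)"
  have bvc: "\<And>i. i \<le> n \<Longrightarrow> bv i \<in> carrier R" unfolding bv_def using nbe nbc ev_carrier by metis
  have bvn: "\<And>i. i \<le> n \<Longrightarrow> bv i \<noteq> \<zero>" unfolding bv_def using ab by blast
  have bvu: "\<And>i. i \<le> n \<Longrightarrow> bv i \<in> Units R" using bvc bvn field_Units by auto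
  have avc: "\<And>i. i \<le> n \<Longrightarrow> eval (a i) t \<in> carrier R" using nae nac ev_carrier by metis
  define Bp where "Bp = finprod R bv {..n}"
  have Bpc: "Bp \<in> carrier R" unfolding Bp_def using bvc by (intro finprod_closed) auto
  have Bpn: "Bp \<noteq> \<zero>" unfolding Bp_def using bvc bvn by (intro finprod_nonzero) auto
  define Pi where "Pi = (\<lambda>i. finprod R bv ({..n} - {i}))"
  have Pic: "\<And>i. Pi i \<in> carrier R" unfolding Pi_def using bvc by (intro finprod_closed) auto
  define e where "e = (\<lambda>i. na i \<otimes>\<^bsub>F[X]\<^esub> finprod (F[X]) nb ({..n} - {i}))"
  have fpc: "\<And>i. finprod (F[X]) nb ({..n} - {i}) \<in> carrier (F[X])"
    using nbc by (intro comm_monoid.finprod_closed[OF FXcm]) auto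
  have ec: "\<And>i. i \<le> n \<Longrightarrow> e i \<in> carrier (F[X])" unfolding e_def using nac fpc by simp
  have ed: "\<And>i. i \<le> n \<Longrightarrow> degree (e i) \<le> M"
  proof -
    fix i assume i: "i \<le> n"
    have "degree (finprod (F[X]) nb ({..n} - {i})) \<le> card ({..n} - {i}) * N"
      using nbc nbd by (intro deg_finprod_le) auto
    moreover have "card ({..n} - {i}) = n" using i by simp
    ultimately have "degree (finprod (F[X]) nb ({..n} - {i})) \<le> n * N" by simp
    then show "degree (e i) \<le> M"
      unfolding e_def M_def using deg_mult_le[OF nac[OF i] fpc, of i] nad[OF i] by simp
  qed
  define Ee where "Ee = (\<lambda>i. eval (e i) t)"
  have Eec: "\<And>i. i \<le> n \<Longrightarrow> Ee i \<in> carrier R" unfolding Ee_def using ec ev_carrier by blast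
  have Eev: "Ee i = eval (a i) t \<otimes> Pi i" if i: "i \<le> n" for i
  proof -
    have "eval (finprod (F[X]) nb ({..n} - {i})) t = (\<Otimes>j\<in>{..n} - {i}. eval (nb j) t)"
      using nbc by (intro ev_finprod) auto
    also have "\<dots> = Pi i" unfolding Pi_def using nbe bvc by (intro finprod_cong') (auto simp: bv_def)
    finally show ?thesis unfolding Ee_def e_def using ev_mult[OF nac[OF i] fpc] nae[OF i] by simp
  qed
  have key: "(eval (a i) t \<otimes> inv (eval (b i) t)) \<otimes> Bp = Ee i" if i: "i \<le> n" for i
  proof -
    have "{..n} = insert i ({..n} - {i})" using i by auto
    have "finprod R bv (insert i ({..n} - {i})) = bv i \<otimes> finprod R bv ({..n} - {i})"
      by (rule finprod_insert) (use bvc i in auto)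
    then have Bpe: "Bp = bv i \<otimes> Pi i" unfolding Bp_def Pi_def using \<open>{..n} = insert i ({..n} - {i})\<close> by simp
    have u: "bv i \<in> Units R" using bvu[OF i] .
    have ic: "inv (bv i) \<in> carrier R" using u by simp
    have bc: "bv i \<in> carrier R" using bvc[OF i] .
    have "(eval (a i) t \<otimes> inv (bv i)) \<otimes> (bv i \<otimes> Pi i) = eval (a i) t \<otimes> ((inv (bv i) \<otimes> bv i) \<otimes> Pi i)"
      using avc[OF i] ic bc Pic[of i] by (simp add: m_assoc)
    also have "\<dots> = eval (a i) t \<otimes> Pi i" using u Pic[of i] by simp
    finally show ?thesis using Bpe Eev[OF i] unfolding bv_def by simp
  qed
  have cc: "\<And>i. i \<le> n \<Longrightarrow> eval (a i) t \<otimes> inv (eval (b i) t) \<in> carrier R"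
    using avc bvu unfolding bv_def by simp
  have eqE: "(\<Oplus>i\<in>{..n}. Ee i \<otimes> x [^] i) = \<zero>"
  proof -
    have "(\<Oplus>i\<in>{..n}. Ee i \<otimes> x [^] i) = (\<Oplus>i\<in>{..n}. Bp \<otimes> ((eval (a i) t \<otimes> inv (eval (b i) t)) \<otimes> x [^] i))"
    proof (rule finsum_cong')
      fix i assume "i \<in> {..n}"
      then have i: "i \<le> n" by simp
      show "Ee i \<otimes> x [^] i = Bp \<otimes> ((eval (a i) t \<otimes> inv (eval (b i) t)) \<otimes> x [^] i)"
        using key[OF i, symmetric] Bpc cc[OF i] xc by (simp add: m_ac)
    qed (use Bpc cc xc in auto)
    also have "\<dots> = Bp \<otimes> (\<Oplus>i\<in>{..n}. (eval (a i) t \<otimes> inv (eval (b i) t)) \<otimes> x [^] i)"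
      using Bpc cc xc by (intro finsum_rdistr[symmetric]) auto
    finally show ?thesis using eq Bpc by simp
  qed
  have "(eval (a n) t \<otimes> inv (eval (b n) t)) \<otimes> Bp \<noteq> \<zero>"
    using integral[OF _ cc[of n] Bpc] cn Bpn by blast
  then have Enn: "Ee n \<noteq> \<zero>" using key[of n] by simp
  have npos: "0 < n"
  proof (rule ccontr)
    assume "\<not> 0 < n"
    then have "n = 0" by simp
    then show False using eq cn cc[of 0] by (simp add: finsum_0)
  qed
  have mono: "(Ee n \<otimes> x) [^] n \<oplus> (\<Oplus>i\<in>{..<n}. (Ee i \<otimes> Ee n [^] (n - 1 - i)) \<otimes> (Ee n \<otimes> x) [^] i) = \<zero>"
    using monic_transform[OF xc Eec eqE npos] .
  define z where "z = Ee n \<otimes> x"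
  have zc: "z \<in> carrier R" unfolding z_def using Eec xc by simp
  have zf: "isfrac z"
  proof -
    obtain A0 B0 where AB0: "A0 \<in> carrier (F[X])" "B0 \<in> carrier (F[X])" "B0 \<noteq> []"
      "x = eval A0 t \<otimes> inv (eval B0 t)" using isfrac_K[OF x] unfolding isfrac_def by blast
    have B0u: "eval B0 t \<in> Units R" using ev_zero_iff AB0 ev_carrier field_Units by auto
    have "z = eval (e n \<otimes>\<^bsub>F[X]\<^esub> A0) t \<otimes> inv (eval B0 t)"
      unfolding z_def AB0(4) Ee_def using ev_mult[OF ec[of n] AB0(1)] ev_carrier[OF ec[of n]]
        ev_carrier[OF AB0(1)] B0u by (simp add: m_assoc)
    then show ?thesis unfolding isfrac_def using AB0 ec[of n] by (intro exI[of _ "e n \<otimes>\<^bsub>F[X]\<^esub> A0"] exI[of _ B0]) simp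
  qed
  have fP: "\<And>i. i < n \<Longrightarrow> Ee i \<otimes> Ee n [^] (n - 1 - i) \<in> PolT"
    unfolding Ee_def using ec PolT_I PolT_mult PolT_pow by simp
  have zP: "z \<in> PolT"
    using integral_closed[OF zc zf fP npos] mono unfolding z_def by simp
  then obtain Yp where Yp: "Yp \<in> carrier (F[X])" "z = eval Yp t" by (blast elim: PolT_E)
  define g where "g = (\<lambda>i. e i \<otimes>\<^bsub>F[X]\<^esub> e n [^]\<^bsub>F[X]\<^esub> (n - 1 - i))"
  have gc: "\<And>i. i < n \<Longrightarrow> g i \<in> carrier (F[X])" unfolding g_def using ec by simp
  have gd: "\<And>i. i < n \<Longrightarrow> degree (g i) \<le> (n - i) * M"
  proof -
    fix i assume i: "i < n"
    have "degree (g i) \<le> degree (e i) + (n - 1 - i) * degree (e n)"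
      unfolding g_def using deg_mult_le[OF ec FX_pow[OF ec[of n]]] deg_pow[OF ec[of n]] i by fastforce
    also have "\<dots> \<le> M + (n - 1 - i) * M" using ed i by (intro add_mono mult_le_mono2) auto
    also have "\<dots> = (n - i) * M"
    proof -
      have "n - i = Suc (n - 1 - i)" using i by simp
      then show ?thesis by simp
    qed
    finally show "degree (g i) \<le> (n - i) * M" .
  qed
  have ge: "\<And>i. i < n \<Longrightarrow> eval (g i) t = Ee i \<otimes> Ee n [^] (n - 1 - i)"
    unfolding g_def Ee_def using ec ev_mult ev_pow by simp
  have eqY: "eval Yp t [^] n \<oplus> (\<Oplus>i\<in>{..<n}. eval (g i) t \<otimes> eval Yp t [^] i) = \<zero>"
  proof -
    have "(\<Oplus>i\<in>{..<n}. eval (g i) t \<otimes> eval Yp t [^] i) = (\<Oplus>i\<in>{..<n}. (Ee i \<otimes> Ee n [^] (n - 1 - i)) \<otimes> z [^] i)"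
      using ge Yp zc Eec by (intro finsum_cong') auto
    then show ?thesis using mono Yp(2) unfolding z_def by simp
  qed
  have dY: "degree Yp \<le> M" using degree_bound[OF Yp(1) gc gd npos eqY] .
  have "x = z \<otimes> inv (Ee n)"
  proof -
    have Eu: "Ee n \<in> Units R" using Enn Eec[of n] field_Units by auto
    have Ec: "Ee n \<in> carrier R" "inv (Ee n) \<in> carrier R" using Eu by auto
    have "z \<otimes> inv (Ee n) = (x \<otimes> Ee n) \<otimes> inv (Ee n)"
      unfolding z_def using Ec xc m_comm by simp
    also have "\<dots> = x \<otimes> (Ee n \<otimes> inv (Ee n))" using Ec xc m_assoc by simp
    also have "\<dots> = x" using Eu xc by simp
    finally show ?thesis by simp
  qed
  then have "x = eval Yp t \<otimes> inv (eval (e n) t)" using Yp(2) Ee_def by simp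
  moreover have "eval (e n) t \<noteq> \<zero>" using Enn Ee_def by simp
  moreover have "set Yp \<subseteq> F" "length Yp \<le> Suc M" using poly_list[OF Yp(1) dY] by auto
  moreover have "set (e n) \<subseteq> F" "length (e n) \<le> Suc M" using poly_list[OF ec[of n] ed[of n]] by auto
  ultimately show ?thesis unfolding M_def by blast
qed

end

lemma alg_closure_closed: "algebraic_closure L K \<Longrightarrow> algebraically_closed L"
proof -
  assume a: "algebraic_closure L K"
  interpret algebraic_closure L K by (rule a)
  show ?thesis by (rule algebraically_closed_axioms)
qed

context field begin

lemma add_pow_sub:
  assumes "subring F R" "x \<in> F"
  shows "add_pow (R\<lparr>carrier := F\<rparr>) (n::nat) x = [n] \<cdot> x"
proof (induction n)
  case 0 then show ?case by (simp add: add_pow_def)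
next
  case (Suc n)
  then show ?case by (simp add: add_pow_def)
qed

lemma pow_zero_field:
  assumes "x \<in> carrier R" "x [^] (k::nat) = \<zero>" shows "x = \<zero> \<or> k = 0"
  using assms(2)
proof (induction k)
  case 0 then show ?case by simp
next
  case (Suc k)
  have "x [^] k \<otimes> x = \<zero>" using Suc.prems by simp
  then have "x [^] k = \<zero> \<or> x = \<zero>" using integral assms(1) by simp
  then show ?case using Suc.IH by auto
qed

lemma pow_in_subring: "subring K R \<Longrightarrow> y \<in> K \<Longrightarrow> y [^] (n::nat) \<in> K"
  by (induction n) (auto simp: subringE(3,6))

lemma char_from_card:
  assumes F: "subfield F R" and fin: "finite F" and pr: "prime (p::nat)"
    and card: "card F = p ^ k" and k: "k \<ge> 1"
  shows "[p] \<cdot> \<one> = \<zero>"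
proof -
  have Fs: "subring F R" using F subfieldE(1) by blast
  let ?S = "R\<lparr>carrier := F\<rparr>"
  have rS: "ring ?S" using subring_is_ring[OF Fs] .
  have gS: "group (add_monoid ?S)" using abelian_group.a_group[OF ring.is_abelian_group[OF rS]] .
  have oneF: "\<one> \<in> F" using subringE(3)[OF Fs] .
  have "\<one> [^]\<^bsub>add_monoid ?S\<^esub> order (add_monoid ?S) = \<one>\<^bsub>add_monoid ?S\<^esub>"
    using group.pow_order_eq_1[OF gS, of \<one>] fin oneF by simp
  moreover have "order (add_monoid ?S) = p ^ k" using card by (simp add: order_def)
  ultimately have "add_pow ?S (p ^ k) \<one> = \<zero>" by (simp add: add_pow_def)
  then have "[(p ^ k)] \<cdot> \<one> = \<zero>" using add_pow_sub[OF Fs oneF] by simp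
  then have z: "([p] \<cdot> \<one>) [^] k = \<zero>" using add_pow_one_power by simp
  show ?thesis using pow_zero_field[OF _ z] k by simp
qed

lemma eval_subring:
  assumes "subring K R" "set a \<subseteq> K" "y \<in> K"
  shows "eval a y \<in> K"
  using assms(2)
proof (induction a)
  case Nil then show ?case using subringE(2)[OF assms(1)] by simp
next
  case (Cons h a)
  have "y [^] length a \<in> K" using pow_in_subring[OF assms(1,3)] .
  then show ?case using Cons subringE(6,7)[OF assms(1)] by simp
qed

end

lemma eventually_choice: "eventually (\<lambda>s. \<exists>y. Q s y) F \<Longrightarrow> \<exists>f. eventually (\<lambda>s. Q s (f s)) F"
proof -
  assume e: "eventually (\<lambda>s. \<exists>y. Q s y) F"
  define f where "f = (\<lambda>s. SOME y. Q s y)"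
  have "eventually (\<lambda>s. Q s (f s)) F"
    using e by (rule eventually_mono) (simp add: f_def someI_ex)
  then show ?thesis by blast
qed


context field begin

lemma per_s:
  fixes n N :: nat and aa bb :: "nat \<Rightarrow> 'a list" and c :: "nat \<Rightarrow> 'a" and p :: nat
  assumes cl: "algebraic_closure R (generate_field R (insert t Fq))"
    and Fq: "subfield Fq R" and tt: "t \<in> carrier R" and tr: "transcendental Fq t"
    and pr: "prime p" and pc: "[p] \<cdot> \<one> = \<zero>"
    and al: "\<alpha> \<in> carrier R" and alK: "\<alpha> \<notin> generate_field R (insert t Fq)"
    and aK: "\<alpha> [^] p \<ominus> \<alpha> \<in> generate_field R (insert t Fq)"
    and x: "x \<in> generate_field R (insert \<alpha> (generate_field R (insert t Fq)))"
    and ab: "\<And>i. i \<le> n \<Longrightarrow> length (aa i) \<le> N \<and> length (bb i) \<le> N \<and> set (aa i) \<subseteq> Fq \<and>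
               set (bb i) \<subseteq> Fq \<and> eval (bb i) t \<noteq> \<zero> \<and> c i = eval (aa i) t \<otimes> inv (eval (bb i) t)"
    and cn: "c n \<noteq> \<zero>" and ev: "(\<Oplus>i\<in>{..n}. c i \<otimes> x [^] i) = \<zero>" and np: "n < p"
  shows "\<exists>A B. length A \<le> Suc (Suc n * N) \<and> length B \<le> Suc (Suc n * N) \<and> set A \<subseteq> Fq \<and>
               set B \<subseteq> Fq \<and> eval B t \<noteq> \<zero> \<and> x = eval A t \<otimes> inv (eval B t)"
proof -
  define Kt where "Kt = generate_field R (insert t Fq)"
  interpret T: tfield R Fq t
    by (intro tfield.intro tfield_axioms.intro field_axioms Fq tt) (use tr in \<open>simp add: over_def\<close>)
  have TK: "T.K = Kt" unfolding T.K_def Kt_def ..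
  have Ksf: "subfield Kt R" unfolding Kt_def using algebraic_closure.axioms(2)[OF cl] .
  have Kss: "subring Kt R" using Ksf subfieldE(1) by blast
  have AC: "algebraically_closed R" using alg_closure_closed[OF cl] .
  have algall: "\<And>y. y \<in> carrier R \<Longrightarrow> (algebraic over Kt) y"
    unfolding Kt_def using algebraic_closure.algebraic_extension[OF cl] by blast
  have FK: "Fq \<subseteq> Kt"
  proof
    fix z assume "z \<in> Fq" then have "z \<in> insert t Fq" by simp
    then show "z \<in> Kt" unfolding Kt_def by (rule generate_field.incl)
  qed
  have tK: "t \<in> Kt" unfolding Kt_def by (rule generate_field.incl) simp
  have KR: "Kt \<subseteq> carrier R" using subringE(1)[OF Kss] .
  have cK: "c i \<in> Kt" if i: "i \<le> n" for i
  proof -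
    have e1: "eval (aa i) t \<in> Kt" using eval_subring[OF Kss, of "aa i" t] ab[OF i] FK tK by auto
    have e2: "eval (bb i) t \<in> Kt" using eval_subring[OF Kss, of "bb i" t] ab[OF i] FK tK by auto
    have "eval (bb i) t \<in> Kt - {\<zero>}" using e2 ab[OF i] by blast
    then have "inv (eval (bb i) t) \<in> Kt" using subfield_m_inv(1)[OF Ksf] by blast
    then show ?thesis using ab[OF i] e1 subringE(6)[OF Kss] by auto
  qed
  have xK: "x \<in> Kt"
    using low_degree_in_base[OF AC Ksf algall pr pc al alK[folded Kt_def] aK[folded Kt_def]
      x[folded Kt_def] cK cn ev np] .
  have xc: "x \<in> carrier R" using xK KR by auto
  have abT: "\<And>i. i \<le> n \<Longrightarrow> set (aa i) \<subseteq> Fq \<and> length (aa i) \<le> N \<and> set (bb i) \<subseteq> Fq \<and>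
       length (bb i) \<le> N \<and> eval (bb i) t \<noteq> \<zero>" using ab by blast
  have cn': "eval (aa n) t \<otimes> inv (eval (bb n) t) \<noteq> \<zero>" using ab[of n] cn by simp
  have ev': "(\<Oplus>i\<in>{..n}. (eval (aa i) t \<otimes> inv (eval (bb i) t)) \<otimes> x [^] i) = \<zero>"
  proof -
    have cc: "\<And>i. i \<le> n \<Longrightarrow> c i \<in> carrier R" using cK KR by auto
    have "(\<Oplus>i\<in>{..n}. (eval (aa i) t \<otimes> inv (eval (bb i) t)) \<otimes> x [^] i) = (\<Oplus>i\<in>{..n}. c i \<otimes> x [^] i)"
    proof (rule finsum_cong')
      fix i assume "i \<in> {..n}"
      then have i: "i \<le> n" by simp
      have "c i = eval (aa i) t \<otimes> inv (eval (bb i) t)" using ab[OF i] by blast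
      then show "(eval (aa i) t \<otimes> inv (eval (bb i) t)) \<otimes> x [^] i = c i \<otimes> x [^] i" by simp
    qed (use cc xc in auto)
    then show ?thesis using ev by simp
  qed
  have xK': "x \<in> T.K" using xK TK by simp
  show ?thesis using T.bound_repr[OF xK' abT cn' ev'] by blast
qed

lemma per_s_rev:
  assumes cl: "algebraic_closure R (generate_field R (insert t Fq))"
    and Fq: "subfield Fq R" and tt: "t \<in> carrier R" and al: "\<alpha> \<in> carrier R"
    and ab: "set a \<subseteq> Fq" "set b \<subseteq> Fq" "eval b t \<noteq> \<zero>" and y: "y = eval a t \<otimes> inv (eval b t)"
  shows "y \<in> generate_field R (insert \<alpha> (generate_field R (insert t Fq))) \<and> y \<in> carrier R"
proof -
  define Kt where "Kt = generate_field R (insert t Fq)"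
  have Ksf: "subfield Kt R" unfolding Kt_def using algebraic_closure.axioms(2)[OF cl] .
  have Kss: "subring Kt R" using Ksf subfieldE(1) by blast
  have FK: "Fq \<subseteq> Kt"
  proof
    fix z assume "z \<in> Fq" then have "z \<in> insert t Fq" by simp
    then show "z \<in> Kt" unfolding Kt_def by (rule generate_field.incl)
  qed
  have tK: "t \<in> Kt" unfolding Kt_def by (rule generate_field.incl) simp
  have KR: "Kt \<subseteq> carrier R" using subringE(1)[OF Kss] .
  have e1: "eval a t \<in> Kt" using eval_subring[OF Kss _ tK] ab(1) FK by blast
  have e2: "eval b t \<in> Kt" using eval_subring[OF Kss _ tK] ab(2) FK by blast
  have "eval b t \<in> Kt - {\<zero>}" using e2 ab(3) by blast
  then have "inv (eval b t) \<in> Kt" using subfield_m_inv(1)[OF Ksf] by blast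
  then have yK: "y \<in> Kt" using y e1 subringE(6)[OF Kss] by simp
  have "y \<in> insert \<alpha> Kt" using yK by simp
  then have "y \<in> generate_field R (insert \<alpha> Kt)" by (rule generate_field.incl)
  moreover have "y \<in> carrier R" using yK KR by blast
  ultimately show ?thesis unfolding Kt_def by blast
qed
end

theorem mainTheorem14:
  fixes D :: "'s filter"
    and \<Omega> :: "'s \<Rightarrow> 'b ring"      \<comment> \<open>\<Omega> s = the fixed algebraic closure of F_s(t)\<close>
    and Fq :: "'s \<Rightarrow> 'b set"       \<comment> \<open>the finite field F_s, as a subfield of \<Omega> s\<close>
    and t :: "'s \<Rightarrow> 'b"            \<comment> \<open>the variable t in \<Omega> s\<close>
    and p :: "'s \<Rightarrow> nat"
    and \<alpha> :: "'s \<Rightarrow> 'b"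
    and L :: "'s \<Rightarrow> 'b set"        \<comment> \<open>the Artin-Schreier extensions L_s\<close>
  assumes S_inf: "infinite (UNIV :: 's set)"
    and D: "nonprincipal_ultrafilter D"
    and fin: "\<And>s. subfield (Fq s) (\<Omega> s) \<and> finite (Fq s) \<and> prime (p s) \<and>
                   (\<exists>k. k \<ge> 1 \<and> card (Fq s) = p s ^ k)"
    and trans: "\<And>s. t s \<in> carrier (\<Omega> s) \<and> ring.transcendental (\<Omega> s) (Fq s) (t s)"
    and closure: "\<And>s. algebraic_closure (\<Omega> s) (ratfield \<Omega> Fq t s)"
    and no_char: "\<And>P. prime (P :: nat) \<Longrightarrow> \<not> eventually (\<lambda>s. p s = P) D"
    and AS: "eventually (\<lambda>s. \<alpha> s \<in> carrier (\<Omega> s) \<and>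
               \<alpha> s \<notin> ratfield \<Omega> Fq t s \<and>
               (\<alpha> s [^]\<^bsub>\<Omega> s\<^esub> p s) \<ominus>\<^bsub>\<Omega> s\<^esub> \<alpha> s \<in> ratfield \<Omega> Fq t s \<and>
               L s = generate_field (\<Omega> s) (insert (\<alpha> s) (ratfield \<Omega> Fq t s))) D"
  shows "\<forall>x :: 's \<Rightarrow> 'b.
           (eventually (\<lambda>s. x s \<in> L s) D \<and> alg_over_IF D \<Omega> Fq t x) \<longleftrightarrow> in_IF D \<Omega> Fq t x"
proof -
  have fld: "\<And>s. field (\<Omega> s)" using closure algebraic_closure.axioms(1) by blast
  have cl: "\<And>s. algebraic_closure (\<Omega> s) (generate_field (\<Omega> s) (insert (t s) (Fq s)))"
    using closure unfolding ratfield_def by blast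
  have pc: "\<And>s. [p s] \<cdot>\<^bsub>\<Omega> s\<^esub> \<one>\<^bsub>\<Omega> s\<^esub> = \<zero>\<^bsub>\<Omega> s\<^esub>"
  proof -
    fix s
    obtain k where k: "k \<ge> 1" "card (Fq s) = p s ^ k" using fin[of s] by blast
    show "[p s] \<cdot>\<^bsub>\<Omega> s\<^esub> \<one>\<^bsub>\<Omega> s\<^esub> = \<zero>\<^bsub>\<Omega> s\<^esub>"
      using field.char_from_card[OF fld[of s], of "Fq s" "p s" k] fin[of s] k by blast
  qed
  have Dnb: "D \<noteq> bot" and Dult: "\<And>P. eventually P D \<or> eventually (\<lambda>s. \<not> P s) D"
    using D unfolding nonprincipal_ultrafilter_def by auto
  show ?thesis
  proof (intro allI iffI)
    fix x :: "'s \<Rightarrow> 'b"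
    assume H: "eventually (\<lambda>s. x s \<in> L s) D \<and> alg_over_IF D \<Omega> Fq t x"
    from H obtain n :: nat and c :: "nat \<Rightarrow> 's \<Rightarrow> 'b" where ci: "\<forall>i\<le>n. in_IF D \<Omega> Fq t (c i)"
      and cn0: "\<not> eventually (\<lambda>s. c n s = \<zero>\<^bsub>\<Omega> s\<^esub>) D"
      and ev0: "eventually (\<lambda>s. (\<Oplus>\<^bsub>\<Omega> s\<^esub> i\<in>{..n}. c i s \<otimes>\<^bsub>\<Omega> s\<^esub> (x s [^]\<^bsub>\<Omega> s\<^esub> i)) = \<zero>\<^bsub>\<Omega> s\<^esub>) D"
      unfolding alg_over_IF_def by blast
    define Q where "Q = (\<lambda>i N (aa::'s \<Rightarrow> 'b list) (bb::'s \<Rightarrow> 'b list). eventually (\<lambda>s.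
        length (aa s) \<le> N \<and> length (bb s) \<le> N \<and>
        set (aa s) \<subseteq> Fq s \<and> set (bb s) \<subseteq> Fq s \<and>
        ring.eval (\<Omega> s) (bb s) (t s) \<noteq> \<zero>\<^bsub>\<Omega> s\<^esub> \<and>
        c i s = ring.eval (\<Omega> s) (aa s) (t s) \<otimes>\<^bsub>\<Omega> s\<^esub> inv\<^bsub>\<Omega> s\<^esub> (ring.eval (\<Omega> s) (bb s) (t s))) D)"
    have "\<forall>i\<in>{..n}. \<exists>T. Q i (fst T) (fst (snd T)) (snd (snd T))"
    proof
      fix i assume "i \<in> {..n}"
      then have "in_IF D \<Omega> Fq t (c i)" using ci by simp
      then obtain N aa bb where "Q i N aa bb" unfolding in_IF_def Q_def by blast
      then show "\<exists>T. Q i (fst T) (fst (snd T)) (snd (snd T))" by (intro exI[of _ "(N, aa, bb)"]) simp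
    qed
    from bchoice[OF this] obtain T where T: "\<forall>i\<in>{..n}. Q i (fst (T i)) (fst (snd (T i))) (snd (snd (T i)))"
      by (elim exE)
    define NN where "NN = (\<lambda>i. fst (T i))"
    define AA where "AA = (\<lambda>i. fst (snd (T i)))"
    define BB where "BB = (\<lambda>i. snd (snd (T i)))"
    define N where "N = Max (NN ` {..n})"
    have NNle: "\<And>i. i \<le> n \<Longrightarrow> NN i \<le> N" unfolding N_def by (intro Max_ge) auto
    have evall: "eventually (\<lambda>s. \<forall>i\<in>{..n}.
        length (AA i s) \<le> NN i \<and> length (BB i s) \<le> NN i \<and>
        set (AA i s) \<subseteq> Fq s \<and> set (BB i s) \<subseteq> Fq s \<and>
        ring.eval (\<Omega> s) (BB i s) (t s) \<noteq> \<zero>\<^bsub>\<Omega> s\<^esub> \<and>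
        c i s = ring.eval (\<Omega> s) (AA i s) (t s) \<otimes>\<^bsub>\<Omega> s\<^esub> inv\<^bsub>\<Omega> s\<^esub> (ring.eval (\<Omega> s) (BB i s) (t s))) D"
      by (rule eventually_ball_finite) (use T in \<open>simp_all add: Q_def NN_def AA_def BB_def\<close>)
    have ecn: "eventually (\<lambda>s. c n s \<noteq> \<zero>\<^bsub>\<Omega> s\<^esub>) D"
      using Dult[of "\<lambda>s. c n s = \<zero>\<^bsub>\<Omega> s\<^esub>"] cn0 by auto
    have enp: "eventually (\<lambda>s. n < p s) D"
    proof -
      define PS where "PS = {P::nat. prime P \<and> P \<le> n}"
      have fPS: "finite PS" unfolding PS_def by (rule finite_subset[of _ "{..n}"]) auto
      have "\<forall>P\<in>PS. eventually (\<lambda>s. p s \<noteq> P) D"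
      proof
        fix P assume "P \<in> PS"
        then have "prime P" unfolding PS_def by simp
        then show "eventually (\<lambda>s. p s \<noteq> P) D" using Dult[of "\<lambda>s. p s = P"] no_char by auto
      qed
      then have "eventually (\<lambda>s. \<forall>P\<in>PS. p s \<noteq> P) D" by (rule eventually_ball_finite[OF fPS])
      then show ?thesis
      proof (rule eventually_mono)
        fix s assume h: "\<forall>P\<in>PS. p s \<noteq> P"
        show "n < p s"
        proof (rule ccontr)
          assume "\<not> n < p s"
          then have "p s \<in> PS" unfolding PS_def using fin[of s] by auto
          then show False using h by blast
        qed
      qed
    qed
    have main: "eventually (\<lambda>s. \<exists>A B. length A \<le> Suc (Suc n * N) \<and> length B \<le> Suc (Suc n * N) \<and>
        set A \<subseteq> Fq s \<and> set B \<subseteq> Fq s \<and> ring.eval (\<Omega> s) B (t s) \<noteq> \<zero>\<^bsub>\<Omega> s\<^esub> \<and>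
        x s = ring.eval (\<Omega> s) A (t s) \<otimes>\<^bsub>\<Omega> s\<^esub> inv\<^bsub>\<Omega> s\<^esub> (ring.eval (\<Omega> s) B (t s))) D"
      using H[THEN conjunct1] AS evall ecn ev0 enp
    proof eventually_elim
      case (elim s)
      have ab: "\<And>i. i \<le> n \<Longrightarrow> length (AA i s) \<le> N \<and> length (BB i s) \<le> N \<and>
        set (AA i s) \<subseteq> Fq s \<and> set (BB i s) \<subseteq> Fq s \<and>
        ring.eval (\<Omega> s) (BB i s) (t s) \<noteq> \<zero>\<^bsub>\<Omega> s\<^esub> \<and>
        c i s = ring.eval (\<Omega> s) (AA i s) (t s) \<otimes>\<^bsub>\<Omega> s\<^esub> inv\<^bsub>\<Omega> s\<^esub> (ring.eval (\<Omega> s) (BB i s) (t s))"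
      proof -
        fix i assume i: "i \<le> n"
        then have "length (AA i s) \<le> NN i \<and> length (BB i s) \<le> NN i \<and>
          set (AA i s) \<subseteq> Fq s \<and> set (BB i s) \<subseteq> Fq s \<and>
          ring.eval (\<Omega> s) (BB i s) (t s) \<noteq> \<zero>\<^bsub>\<Omega> s\<^esub> \<and>
          c i s = ring.eval (\<Omega> s) (AA i s) (t s) \<otimes>\<^bsub>\<Omega> s\<^esub> inv\<^bsub>\<Omega> s\<^esub> (ring.eval (\<Omega> s) (BB i s) (t s))"
          using elim by simp
        then show "length (AA i s) \<le> N \<and> length (BB i s) \<le> N \<and>
          set (AA i s) \<subseteq> Fq s \<and> set (BB i s) \<subseteq> Fq s \<and>
          ring.eval (\<Omega> s) (BB i s) (t s) \<noteq> \<zero>\<^bsub>\<Omega> s\<^esub> \<and>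
          c i s = ring.eval (\<Omega> s) (AA i s) (t s) \<otimes>\<^bsub>\<Omega> s\<^esub> inv\<^bsub>\<Omega> s\<^esub> (ring.eval (\<Omega> s) (BB i s) (t s))"
          using NNle[OF i] by linarith
      qed
      have xg: "x s \<in> generate_field (\<Omega> s) (insert (\<alpha> s) (generate_field (\<Omega> s) (insert (t s) (Fq s))))"
        using elim unfolding ratfield_def by simp
      have AS': "\<alpha> s \<in> carrier (\<Omega> s)" "\<alpha> s \<notin> generate_field (\<Omega> s) (insert (t s) (Fq s))"
        "(\<alpha> s [^]\<^bsub>\<Omega> s\<^esub> p s) \<ominus>\<^bsub>\<Omega> s\<^esub> \<alpha> s \<in> generate_field (\<Omega> s) (insert (t s) (Fq s))"
        using elim unfolding ratfield_def by auto
      have Fqs: "subfield (Fq s) (\<Omega> s)" and prs: "prime (p s)" using fin[of s] by auto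
      have ts: "t s \<in> carrier (\<Omega> s)" and trs: "ring.transcendental (\<Omega> s) (Fq s) (t s)"
        using trans[of s] by auto
      have cns: "c n s \<noteq> \<zero>\<^bsub>\<Omega> s\<^esub>" and nps: "n < p s" using elim by auto
      have evs: "(\<Oplus>\<^bsub>\<Omega> s\<^esub> i\<in>{..n}. c i s \<otimes>\<^bsub>\<Omega> s\<^esub> (x s [^]\<^bsub>\<Omega> s\<^esub> i)) = \<zero>\<^bsub>\<Omega> s\<^esub>" using elim by simp
      show ?case
        using field.per_s[OF fld[of s] cl[of s] Fqs ts trs prs pc[of s] AS'(1) AS'(2) AS'(3) xg ab cns evs nps] .
    qed
    define \<Phi> where "\<Phi> = (\<lambda>s A B. length A \<le> Suc (Suc n * N) \<and> length B \<le> Suc (Suc n * N) \<and>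
        set A \<subseteq> Fq s \<and> set B \<subseteq> Fq s \<and> ring.eval (\<Omega> s) B (t s) \<noteq> \<zero>\<^bsub>\<Omega> s\<^esub> \<and>
        x s = ring.eval (\<Omega> s) A (t s) \<otimes>\<^bsub>\<Omega> s\<^esub> inv\<^bsub>\<Omega> s\<^esub> (ring.eval (\<Omega> s) B (t s)))"
    have main': "eventually (\<lambda>s. \<exists>A B. \<Phi> s A B) D" using main unfolding \<Phi>_def .
    define fa where "fa = (\<lambda>s. SOME A. \<exists>B. \<Phi> s A B)"
    define fb where "fb = (\<lambda>s. SOME B. \<Phi> s (fa s) B)"
    have e: "eventually (\<lambda>s. \<Phi> s (fa s) (fb s)) D"
      using main'
    proof (rule eventually_mono)
      fix s assume "\<exists>A B. \<Phi> s A B"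
      then have "\<exists>B. \<Phi> s (fa s) B" unfolding fa_def by (rule someI_ex)
      then show "\<Phi> s (fa s) (fb s)" unfolding fb_def by (rule someI_ex)
    qed
    show "in_IF D \<Omega> Fq t x" unfolding in_IF_def
      by (intro exI[of _ "Suc (Suc n * N)"] exI[of _ fa] exI[of _ fb]) (use e in \<open>unfold \<Phi>_def\<close>)
  next
    fix x :: "'s \<Rightarrow> 'b"
    assume H: "in_IF D \<Omega> Fq t x"
    from H obtain N a b where E: "eventually (\<lambda>s.
        length (a s) \<le> N \<and> length (b s) \<le> N \<and>
        set (a s) \<subseteq> Fq s \<and> set (b s) \<subseteq> Fq s \<and>
        ring.eval (\<Omega> s) (b s) (t s) \<noteq> \<zero>\<^bsub>\<Omega> s\<^esub> \<and>
        x s = ring.eval (\<Omega> s) (a s) (t s) \<otimes>\<^bsub>\<Omega> s\<^esub> inv\<^bsub>\<Omega> s\<^esub> (ring.eval (\<Omega> s) (b s) (t s))) D"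
      unfolding in_IF_def by blast
    have L1: "eventually (\<lambda>s. x s \<in> L s \<and> x s \<in> carrier (\<Omega> s)) D"
      using E AS
    proof eventually_elim
      case (elim s)
      have "x s \<in> generate_field (\<Omega> s) (insert (\<alpha> s) (generate_field (\<Omega> s) (insert (t s) (Fq s)))) \<and>
            x s \<in> carrier (\<Omega> s)"
        using field.per_s_rev[OF fld[of s] cl[of s], of "\<alpha> s" "a s" "b s" "x s"] elim fin[of s] trans[of s]
        by blast
      then show ?case using elim unfolding ratfield_def by simp
    qed
    define c :: "nat \<Rightarrow> 's \<Rightarrow> 'b" where "c = (\<lambda>i. if i = 0 then x else (\<lambda>s. \<ominus>\<^bsub>\<Omega> s\<^esub> \<one>\<^bsub>\<Omega> s\<^esub>))"
    have c1: "in_IF D \<Omega> Fq t (c 1)"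
    proof -
      have "\<forall>s. length [\<ominus>\<^bsub>\<Omega> s\<^esub> \<one>\<^bsub>\<Omega> s\<^esub>] \<le> 1 \<and> length [\<one>\<^bsub>\<Omega> s\<^esub>] \<le> 1 \<and>
        set [\<ominus>\<^bsub>\<Omega> s\<^esub> \<one>\<^bsub>\<Omega> s\<^esub>] \<subseteq> Fq s \<and> set [\<one>\<^bsub>\<Omega> s\<^esub>] \<subseteq> Fq s \<and>
        ring.eval (\<Omega> s) [\<one>\<^bsub>\<Omega> s\<^esub>] (t s) \<noteq> \<zero>\<^bsub>\<Omega> s\<^esub> \<and>
        c 1 s = ring.eval (\<Omega> s) [\<ominus>\<^bsub>\<Omega> s\<^esub> \<one>\<^bsub>\<Omega> s\<^esub>] (t s) \<otimes>\<^bsub>\<Omega> s\<^esub> inv\<^bsub>\<Omega> s\<^esub> (ring.eval (\<Omega> s) [\<one>\<^bsub>\<Omega> s\<^esub>] (t s))"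
      proof
        fix s
        interpret field "\<Omega> s" by (rule fld)
        have Fs: "subring (Fq s) (\<Omega> s)" using fin[of s] subfieldE(1) by blast
        have "\<one>\<^bsub>\<Omega> s\<^esub> \<in> Fq s" "\<ominus>\<^bsub>\<Omega> s\<^esub> \<one>\<^bsub>\<Omega> s\<^esub> \<in> Fq s" using subringE(3,5)[OF Fs] by auto
        then show "length [\<ominus>\<^bsub>\<Omega> s\<^esub> \<one>\<^bsub>\<Omega> s\<^esub>] \<le> 1 \<and> length [\<one>\<^bsub>\<Omega> s\<^esub>] \<le> 1 \<and>
          set [\<ominus>\<^bsub>\<Omega> s\<^esub> \<one>\<^bsub>\<Omega> s\<^esub>] \<subseteq> Fq s \<and> set [\<one>\<^bsub>\<Omega> s\<^esub>] \<subseteq> Fq s \<and> eval [\<one>\<^bsub>\<Omega> s\<^esub>] (t s) \<noteq> \<zero>\<^bsub>\<Omega> s\<^esub> \<and>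
          c 1 s = eval [\<ominus>\<^bsub>\<Omega> s\<^esub> \<one>\<^bsub>\<Omega> s\<^esub>] (t s) \<otimes>\<^bsub>\<Omega> s\<^esub> inv\<^bsub>\<Omega> s\<^esub> (eval [\<one>\<^bsub>\<Omega> s\<^esub>] (t s))"
          using trans[of s] unfolding c_def by simp
      qed
      then show ?thesis unfolding in_IF_def
        by (intro exI[of _ "1::nat"] exI[of _ "\<lambda>s. [\<ominus>\<^bsub>\<Omega> s\<^esub> \<one>\<^bsub>\<Omega> s\<^esub>]"] exI[of _ "\<lambda>s. [\<one>\<^bsub>\<Omega> s\<^esub>]"])
          (simp add: always_eventually)
    qed
    have cn: "\<not> eventually (\<lambda>s. c 1 s = \<zero>\<^bsub>\<Omega> s\<^esub>) D"
    proof
      assume "eventually (\<lambda>s. c 1 s = \<zero>\<^bsub>\<Omega> s\<^esub>) D"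
      then have "eventually (\<lambda>s. False) D"
      proof (rule eventually_mono)
        fix s assume h: "c 1 s = \<zero>\<^bsub>\<Omega> s\<^esub>"
        interpret field "\<Omega> s" by (rule fld)
        show False using h unfolding c_def by simp
      qed
      then show False using Dnb by simp
    qed
    have ev: "eventually (\<lambda>s. (\<Oplus>\<^bsub>\<Omega> s\<^esub> i\<in>{..1}. c i s \<otimes>\<^bsub>\<Omega> s\<^esub> (x s [^]\<^bsub>\<Omega> s\<^esub> i)) = \<zero>\<^bsub>\<Omega> s\<^esub>) D"
      using L1
    proof eventually_elim
      case (elim s)
      interpret field "\<Omega> s" by (rule fld)
      have xc: "x s \<in> carrier (\<Omega> s)" using elim by simp
      have "(\<Oplus>\<^bsub>\<Omega> s\<^esub>i\<in>{..Suc 0}. c i s \<otimes>\<^bsub>\<Omega> s\<^esub> (x s [^]\<^bsub>\<Omega> s\<^esub> i)) = c 1 s \<otimes>\<^bsub>\<Omega> s\<^esub> (x s [^]\<^bsub>\<Omega> s\<^esub> (1::nat)) \<oplus>\<^bsub>\<Omega> s\<^esub> (\<Oplus>\<^bsub>\<Omega> s\<^esub>i\<in>{..0}. c i s \<otimes>\<^bsub>\<Omega> s\<^esub> (x s [^]\<^bsub>\<Omega> s\<^esub> i))"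
        using xc by (subst finsum_Suc) (auto simp: c_def)
      also have "\<dots> = \<zero>\<^bsub>\<Omega> s\<^esub>" using xc by (simp add: c_def finsum_0 l_minus l_neg)
      finally show ?case by simp
    qed
    have "alg_over_IF D \<Omega> Fq t x"
      unfolding alg_over_IF_def
    proof (intro conjI exI[of _ "1::nat"] exI[of _ c])
      show "eventually (\<lambda>s. x s \<in> carrier (\<Omega> s)) D" using L1 by (rule eventually_mono) simp
      show "\<forall>i\<le>1. in_IF D \<Omega> Fq t (c i)"
        using c1 H by (auto simp: c_def le_Suc_eq)
    qed (use cn ev in auto)
    then show "eventually (\<lambda>s. x s \<in> L s) D \<and> alg_over_IF D \<Omega> Fq t x"
      using L1 by (auto elim: eventually_mono)
  qed
qed

end
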